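(* (1) All inert tori in $G$ are conjugate in $G$. (2) If $T$ is an inert torus, there exists $g\in G$ such that $gTg^{-1}$ is an inert torus in canonical form. (3) If $T_1,T_2$ are inert tori in canonical form, there exists $y\in\mathfrak o^\times$ such that $T_1=a(y)T_2a(y)^{-1}$. (4) If $T$ is an inert torus in canonical form, then $G=B_1T=TB_1$ and $K=B_1(\mathfrak o)T(\mathfrak o)=T(\mathfrak o)B_1(\mathfrak o)$.
   Context: $F$ is a non-archimedean local field of characteristic zero with ring of integers $\mathfrak o$ and odd residue field cardinality; $E$ is its unramified quadratic extension. $G=\mathrm{GL}_2(F)$, $K=\mathrm{GL}_2(\mathfrak o)$, $a(y)=\begin{pmatrix}y&0\\0&1\end{pmatrix}$, $B_1=\{\begin{pmatrix}y&x\\0&1\end{pmatrix}:y\in F^\times,x\in F\}$, $B_1(\mathfrak o)=B_1\cap K$. For $\alpha,\beta,\gamma\in F$ let $S=\begin{pmatrix}\alpha&\beta/2\\\beta/2&\gamma\end{pmatrix}$ and $T_{\alpha,\beta,\gamma}=\{g\in G:{}^tgSg=\det(g)S\}$. A subgroup $T$ is an inert torus if $T=T_{\alpha,\beta,\gamma}$ with $\delta=\beta^2-4\alpha\gamma$ satisfying $F(\sqrt\delta)=E$ (equivalently $\delta$ is a non-square with $v(\delta)$ even). It is in canonical form if $T=T_{\alpha,0,1}$ with $\alpha\in\mathfrak o^\times$ and $-\alpha$ not a square in $\mathfrak o^\times$. $T(\mathfrak o)=T\cap K$. *)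

theory Defs
  imports "HOL-Analysis.Analysis"
begin

text \<open>A normalized discrete valuation v on a field; v 0 is irrelevant (junk).\<close>
definition discrete_valuation :: "('a::field \<Rightarrow> int) \<Rightarrow> bool" where
  "discrete_valuation v \<longleftrightarrow>
     (\<forall>x y. x \<noteq> 0 \<longrightarrow> y \<noteq> 0 \<longrightarrow> v (x * y) = v x + v y) \<and>
     (\<forall>x y. x \<noteq> 0 \<longrightarrow> y \<noteq> 0 \<longrightarrow> x + y \<noteq> 0 \<longrightarrow> v (x + y) \<ge> min (v x) (v y)) \<and>
     (\<forall>n::int. \<exists>x. x \<noteq> 0 \<and> v x = n)"

definition int_ring :: "('a::field \<Rightarrow> int) \<Rightarrow> 'a set" where
  "int_ring v = {x. x = 0 \<or> v x \<ge> 0}"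

definition int_units :: "('a::field \<Rightarrow> int) \<Rightarrow> 'a set" where
  "int_units v = {x. x \<noteq> 0 \<and> v x = 0}"

definition max_ideal :: "('a::field \<Rightarrow> int) \<Rightarrow> 'a set" where
  "max_ideal v = {x. x = 0 \<or> v x > 0}"

text \<open>Elements of the residue field o/p, as cosets inside o.\<close>
definition residue_field :: "('a::field \<Rightarrow> int) \<Rightarrow> 'a set set" where
  "residue_field v = (\<lambda>x. {y \<in> int_ring v. y - x \<in> max_ideal v}) ` int_ring v"

definition v_cauchy :: "('a::field \<Rightarrow> int) \<Rightarrow> (nat \<Rightarrow> 'a) \<Rightarrow> bool" where
  "v_cauchy v s \<longleftrightarrow> (\<forall>N::int. \<exists>M. \<forall>m\<ge>M. \<forall>n\<ge>M. s m = s n \<or> v (s m - s n) \<ge> N)"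

definition v_converges :: "('a::field \<Rightarrow> int) \<Rightarrow> (nat \<Rightarrow> 'a) \<Rightarrow> 'a \<Rightarrow> bool" where
  "v_converges v s L \<longleftrightarrow> (\<forall>N::int. \<exists>M. \<forall>n\<ge>M. s n = L \<or> v (s n - L) \<ge> N)"

definition nonarch_local_field :: "('a::field \<Rightarrow> int) \<Rightarrow> bool" where
  "nonarch_local_field v \<longleftrightarrow> discrete_valuation v \<and>
     (\<forall>s. v_cauchy v s \<longrightarrow> (\<exists>L. v_converges v s L)) \<and>
     finite (residue_field v)"

type_synonym 'a mat2 = "'a^2^2"

definition mk2 :: "'a \<Rightarrow> 'a \<Rightarrow> 'a \<Rightarrow> 'a \<Rightarrow> 'a mat2" where
  "mk2 a b c d = (\<chi> i j. if i = 1 then (if j = 1 then a else b) else (if j = 1 then c else d))"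

definition GL2 :: "'a::field mat2 set" where
  "GL2 = {g. det g \<noteq> 0}"

definition GL2_O :: "('a::field \<Rightarrow> int) \<Rightarrow> 'a mat2 set" where
  "GL2_O v = {g. (\<forall>i j. g $ i $ j \<in> int_ring v) \<and> det g \<in> int_units v}"

definition a_mat :: "'a::field \<Rightarrow> 'a mat2" where
  "a_mat y = mk2 y 0 0 1"

definition B1 :: "'a::field mat2 set" where
  "B1 = {mk2 y x 0 1 | y x. y \<noteq> 0}"

definition B1_O :: "('a::field \<Rightarrow> int) \<Rightarrow> 'a mat2 set" where
  "B1_O v = B1 \<inter> GL2_O v"

definition Smat :: "'a::field_char_0 \<Rightarrow> 'a \<Rightarrow> 'a \<Rightarrow> 'a mat2" where
  "Smat \<alpha> \<beta> \<gamma> = mk2 \<alpha> (\<beta>/2) (\<beta>/2) \<gamma>"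

definition torus :: "'a::field_char_0 \<Rightarrow> 'a \<Rightarrow> 'a \<Rightarrow> 'a mat2 set" where
  "torus \<alpha> \<beta> \<gamma> = {g \<in> GL2. transpose g ** Smat \<alpha> \<beta> \<gamma> ** g = mat (det g) ** Smat \<alpha> \<beta> \<gamma>}"

definition is_square :: "'a::field \<Rightarrow> bool" where
  "is_square d \<longleftrightarrow> (\<exists>r. d = r * r)"

text \<open>Inert torus: delta = beta^2 - 4 alpha gamma is a non-square of even valuation,
  i.e. F(sqrt delta) is the unramified quadratic extension E.\<close>
definition inert_torus :: "('a::field_char_0 \<Rightarrow> int) \<Rightarrow> 'a mat2 set \<Rightarrow> bool" where
  "inert_torus v T \<longleftrightarrow> (\<exists>\<alpha> \<beta> \<gamma>. T = torus \<alpha> \<beta> \<gamma> \<and>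
      \<not> is_square (\<beta>^2 - 4*\<alpha>*\<gamma>) \<and> even (v (\<beta>^2 - 4*\<alpha>*\<gamma>)))"

definition canonical_inert :: "('a::field_char_0 \<Rightarrow> int) \<Rightarrow> 'a mat2 set \<Rightarrow> bool" where
  "canonical_inert v T \<longleftrightarrow> inert_torus v T \<and> (\<exists>\<alpha>. T = torus \<alpha> 0 1 \<and> \<alpha> \<in> int_units v \<and>
      \<not> (\<exists>u \<in> int_units v. -\<alpha> = u * u))"

definition conj_set :: "'a::field mat2 \<Rightarrow> 'a mat2 set \<Rightarrow> 'a mat2 set" where
  "conj_set g T = (\<lambda>t. g ** t ** matrix_inv g) ` T"

definition set_prod :: "'a::field mat2 set \<Rightarrow> 'a mat2 set \<Rightarrow> 'a mat2 set" where
  "set_prod A B = {a ** b | a b. a \<in> A \<and> b \<in> B}"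

end

theory Submission
  imports Defs
begin


lemma mk2_eq_iff[simp]: "mk2 a b c d = mk2 a' b' c' d' \<longleftrightarrow> a = a' \<and> b = b' \<and> c = c' \<and> d = d'"
  unfolding mk2_def by (auto simp: vec_eq_iff forall_2)

lemma mk2_nth[simp]: "mk2 a b c d $ 1 $ 1 = a" "mk2 a b c d $ 1 $ 2 = b" "mk2 a b c d $ 2 $ 1 = c" "mk2 a b c d $ 2 $ 2 = d"
  unfolding mk2_def by auto

lemma mk2_cases: "g = mk2 (g$1$1) (g$1$2) (g$2$1) (g$2$2)"
  unfolding mk2_def by (auto simp: vec_eq_iff forall_2)

lemma mk2_exhaust: obtains a b c d where "g = mk2 a b c d"
  using mk2_cases by blast

lemma mk2_mul[simp]: "mk2 a b c d ** mk2 e f g h = mk2 (a*e+b*g) (a*f+b*h) (c*e+d*g) (c*f+d*h)"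
  by (simp add: mk2_def matrix_matrix_mult_def vec_eq_iff forall_2 UNIV_2)

lemma mk2_transpose[simp]: "transpose (mk2 a b c d) = mk2 a c b d"
  by (simp add: mk2_def transpose_def vec_eq_iff forall_2)

lemma mk2_det[simp]: "det (mk2 a b c (d::'a::comm_ring_1)) = a*d - b*c"
  by (simp add: det_2)

lemma mat_mk2: "mat x = mk2 x 0 0 x"
  by (simp add: mk2_def mat_def vec_eq_iff forall_2)

lemma sq_ne_helper: "(a::'a::field)*d \<noteq> b*c \<Longrightarrow> a*(a*(d*d)) + b*(b*(c*c)) \<noteq> a*(b*(c*(d*2)))"
proof
  assume "a*d \<noteq> b*c" "a*(a*(d*d)) + b*(b*(c*c)) = a*(b*(c*(d*2)))"
  then have "(a*d - b*c)*(a*d-b*c) = 0" by (simp add: algebra_simps)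
  then show False using \<open>a*d \<noteq> b*c\<close> by simp
qed

lemma mk2_inv:
  fixes a b c d :: "'a::field"
  assumes "a*d - b*c \<noteq> 0"
  shows "matrix_inv (mk2 a b c d) = mk2 (d/(a*d-b*c)) (-b/(a*d-b*c)) (-c/(a*d-b*c)) (a/(a*d-b*c))"
proof -
  let ?A = "mk2 a b c d" and ?X = "mk2 (d/(a*d-b*c)) (-b/(a*d-b*c)) (-c/(a*d-b*c)) (a/(a*d-b*c))"
  have 1: "?A ** ?X = mat 1" "?X ** ?A = mat 1"
    using assms sq_ne_helper[of a d b c] by (simp_all add: mat_mk2 field_simps)
  then have "\<exists>A'. ?A ** A' = mat 1 \<and> A' ** ?A = mat 1" by blast
  then have 2: "?A ** matrix_inv ?A = mat 1 \<and> matrix_inv ?A ** ?A = mat 1"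
    unfolding matrix_inv_def by (rule someI_ex)
  have "matrix_inv ?A = matrix_inv ?A ** (?A ** ?X)" by (simp only: 1(1) matrix_mul_rid)
  also have "\<dots> = ?X" by (simp only: 2 matrix_mul_assoc matrix_mul_lid)
  finally show ?thesis .
qed

lemma GL2_mk2: "mk2 a b c d \<in> GL2 \<longleftrightarrow> a*d - b*c \<noteq> 0"
  by (simp add: GL2_def)

lemma torus_mk2:
  fixes \<alpha> \<beta> \<gamma> :: "'a::field_char_0"
  shows "mk2 a b c d \<in> torus \<alpha> \<beta> \<gamma> \<longleftrightarrow> a*d - b*c \<noteq> 0 \<and>
     \<alpha>*(a-d) + \<beta>*c = 0 \<and> \<alpha>*b + \<gamma>*c = 0 \<and> \<beta>*b + \<gamma>*(d-a) = 0"
proof -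
  have "mk2 a b c d \<in> torus \<alpha> \<beta> \<gamma> \<longleftrightarrow> a*d - b*c \<noteq> 0 \<and>
     a*(a*\<alpha>+c*(\<beta>/2)) + c*(a*(\<beta>/2)+c*\<gamma>) = (a*d-b*c)*\<alpha> \<and>
     a*(b*\<alpha>+d*(\<beta>/2)) + c*(b*(\<beta>/2)+d*\<gamma>) = (a*d-b*c)*(\<beta>/2) \<and>
     b*(a*\<alpha>+c*(\<beta>/2)) + d*(a*(\<beta>/2)+c*\<gamma>) = (a*d-b*c)*(\<beta>/2) \<and>
     b*(b*\<alpha>+d*(\<beta>/2)) + d*(b*(\<beta>/2)+d*\<gamma>) = (a*d-b*c)*\<gamma>"
    by (simp add: torus_def GL2_def Smat_def mat_mk2 algebra_simps)
  also have "\<dots> \<longleftrightarrow> a*d - b*c \<noteq> 0 \<and>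
     \<alpha>*(a-d) + \<beta>*c = 0 \<and> \<alpha>*b + \<gamma>*c = 0 \<and> \<beta>*b + \<gamma>*(d-a) = 0"
  proof (cases "a*d - b*c = 0")
    case True then show ?thesis by simp
  next
    case False
    note D = False
    define x1 where "x1 = \<alpha>*(a-d) + \<beta>*c"
    define x2 where "x2 = \<alpha>*b + \<gamma>*c"
    define x3 where "x3 = \<beta>*b + \<gamma>*(d-a)"
    have e1: "a*(a*\<alpha>+c*(\<beta>/2)) + c*(a*(\<beta>/2)+c*\<gamma>) - (a*d-b*c)*\<alpha> = a*x1 + c*x2"
      unfolding x1_def x2_def by (simp add: algebra_simps)
    have e2: "a*(b*\<alpha>+d*(\<beta>/2)) + c*(b*(\<beta>/2)+d*\<gamma>) - (a*d-b*c)*(\<beta>/2) = a*x2 + c*x3"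
      unfolding x3_def x2_def by (simp add: algebra_simps)
    have e3: "b*(a*\<alpha>+c*(\<beta>/2)) + d*(a*(\<beta>/2)+c*\<gamma>) - (a*d-b*c)*(\<beta>/2) = b*x1 + d*x2"
      unfolding x1_def x2_def by (simp add: algebra_simps)
    have e4: "b*(b*\<alpha>+d*(\<beta>/2)) + d*(b*(\<beta>/2)+d*\<gamma>) - (a*d-b*c)*\<gamma> = b*x2 + d*x3"
      unfolding x3_def x2_def by (simp add: algebra_simps)
    have key: "(a*x1 + c*x2 = 0 \<and> a*x2 + c*x3 = 0 \<and> b*x1 + d*x2 = 0 \<and> b*x2 + d*x3 = 0)
       \<longleftrightarrow> (x1 = 0 \<and> x2 = 0 \<and> x3 = 0)"
    proof
      assume h: "a*x1 + c*x2 = 0 \<and> a*x2 + c*x3 = 0 \<and> b*x1 + d*x2 = 0 \<and> b*x2 + d*x3 = 0"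
      have "(a*d-b*c)*x1 = d*(a*x1 + c*x2) - c*(b*x1 + d*x2)" by (simp add: algebra_simps)
      then have "x1 = 0" using h D by simp
      have "(a*d-b*c)*x2 = a*(b*x1 + d*x2) - b*(a*x1 + c*x2)" by (simp add: algebra_simps)
      then have "x2 = 0" using h D by simp
      have "(a*d-b*c)*x3 = a*(b*x2 + d*x3) - b*(a*x2 + c*x3)" by (simp add: algebra_simps)
      then have "x3 = 0" using h D by simp
      show "x1 = 0 \<and> x2 = 0 \<and> x3 = 0" using \<open>x1 = 0\<close> \<open>x2 = 0\<close> \<open>x3 = 0\<close> by simp
    qed auto
    have f1: "(a*(a*\<alpha>+c*(\<beta>/2)) + c*(a*(\<beta>/2)+c*\<gamma>) = (a*d-b*c)*\<alpha>) \<longleftrightarrow> a*x1 + c*x2 = 0"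
      using e1 by (metis eq_iff_diff_eq_0)
    have f2: "(a*(b*\<alpha>+d*(\<beta>/2)) + c*(b*(\<beta>/2)+d*\<gamma>) = (a*d-b*c)*(\<beta>/2)) \<longleftrightarrow> a*x2 + c*x3 = 0"
      using e2 by (metis eq_iff_diff_eq_0)
    have f3: "(b*(a*\<alpha>+c*(\<beta>/2)) + d*(a*(\<beta>/2)+c*\<gamma>) = (a*d-b*c)*(\<beta>/2)) \<longleftrightarrow> b*x1 + d*x2 = 0"
      using e3 by (metis eq_iff_diff_eq_0)
    have f4: "(b*(b*\<alpha>+d*(\<beta>/2)) + d*(b*(\<beta>/2)+d*\<gamma>) = (a*d-b*c)*\<gamma>) \<longleftrightarrow> b*x2 + d*x3 = 0"
      using e4 by (metis eq_iff_diff_eq_0)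
    show "?thesis" using D f1 f2 f3 f4 key unfolding x1_def x2_def x3_def by blast
  qed
  finally show ?thesis .
qed


lemma det_mul2: "det (A ** B) = det A * det (B::'a::comm_ring_1 mat2)"
  by (cases A rule: mk2_exhaust, cases B rule: mk2_exhaust) (simp add: algebra_simps)

lemma inv_l: fixes P :: "'a::field mat2" shows "det P \<noteq> 0 \<Longrightarrow> matrix_inv P ** P = mat (1::'a::field)"
  by (cases P rule: mk2_exhaust) (simp add: mk2_inv mat_mk2 field_simps sq_ne_helper)

lemma inv_r: fixes P :: "'a::field mat2" shows "det P \<noteq> 0 \<Longrightarrow> P ** matrix_inv P = mat (1::'a::field)"
  by (cases P rule: mk2_exhaust) (simp add: mk2_inv mat_mk2 field_simps sq_ne_helper)

lemma det_inv: "det P \<noteq> 0 \<Longrightarrow> det (matrix_inv P) = 1 / det (P::'a::field mat2)"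
proof -
  assume "det P \<noteq> 0"
  then have "det (matrix_inv P) * det P = 1" using inv_l[of P] det_mul2[of "matrix_inv P" P]
    by (simp add: mat_mk2)
  then show ?thesis using \<open>det P \<noteq> 0\<close> by (simp add: field_simps)
qed

lemma inv_unique: fixes A :: "'a::field mat2" shows "A ** B = mat 1 \<Longrightarrow> det A \<noteq> 0 \<Longrightarrow> matrix_inv A = (B::'a::field mat2)"
proof -
  assume h: "A ** B = mat 1" "det A \<noteq> 0"
  have "matrix_inv A = matrix_inv A ** (A ** B)" by (simp add: h)
  also have "\<dots> = B" by (simp only: matrix_mul_assoc inv_l[OF h(2)] matrix_mul_lid)
  finally show ?thesis .
qed

lemma inv_inv: fixes P :: "'a::field mat2" shows "det P \<noteq> 0 \<Longrightarrow> matrix_inv (matrix_inv P) = (P::'a::field mat2)"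
  by (rule inv_unique) (simp_all add: inv_l det_inv)

lemma mat_comm: "mat c ** (A::'a::comm_ring_1 mat2) = A ** mat (c::'a::comm_ring_1)"
  by (cases A rule: mk2_exhaust) (simp add: mat_mk2 algebra_simps)

definition torusM :: "'a::field mat2 \<Rightarrow> 'a mat2 set" where
  "torusM M = {g \<in> GL2. transpose g ** M ** g = mat (det g) ** M}"

lemma torus_torusM: "torus \<alpha> \<beta> \<gamma> = torusM (Smat \<alpha> \<beta> \<gamma>)"
  by (simp add: torus_def torusM_def)

lemma conj_torusM:
  fixes P :: "'a::field mat2"
  assumes P: "det P \<noteq> 0"
  shows "conj_set (matrix_inv P) (torusM M) = torusM (transpose P ** M ** P)"
proof -
  let ?Pi = "matrix_inv P"
  have ii: "matrix_inv ?Pi = P" by (rule inv_inv[OF P])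
  have l: "?Pi ** P = mat 1" and r: "P ** ?Pi = mat 1" using inv_l[OF P] inv_r[OF P] by auto
  have lt: "transpose P ** transpose ?Pi = mat 1" 
    using l by (metis matrix_transpose_mul transpose_mat)
  have rt: "transpose ?Pi ** transpose P = mat 1"
    using r by (metis matrix_transpose_mul transpose_mat)
  have dPi: "det ?Pi * det P = 1" using det_inv[OF P] P by simp
  show ?thesis
  proof
    show "conj_set ?Pi (torusM M) \<subseteq> torusM (transpose P ** M ** P)"
    proof
      fix u assume "u \<in> conj_set ?Pi (torusM M)"
      then obtain t where t: "t \<in> torusM M" and u: "u = ?Pi ** t ** P"
        unfolding conj_set_def ii by auto
      have dt: "det u = det t" using u dPi by (simp add: det_mul2)
      have "transpose u ** (transpose P ** M ** P) ** u
          = transpose P ** transpose t ** (transpose ?Pi ** transpose P) ** M ** (P ** ?Pi) ** t ** P"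
        by (simp add: u matrix_transpose_mul matrix_mul_assoc)
      also have "\<dots> = transpose P ** (transpose t ** M ** t) ** P"
        by (simp add: rt r matrix_mul_assoc)
      also have "\<dots> = transpose P ** (mat (det t) ** M) ** P"
        using t by (simp add: torusM_def)
      also have "\<dots> = mat (det u) ** (transpose P ** M ** P)"
      proof -
        have "transpose P ** (mat (det t) ** M) ** P = (transpose P ** mat (det t)) ** M ** P"
          by (simp add: matrix_mul_assoc)
        also have "\<dots> = mat (det t) ** (transpose P ** M ** P)"
          by (simp add: mat_comm[symmetric] matrix_mul_assoc)
        finally show ?thesis by (simp add: dt)
      qed
      finally show "u \<in> torusM (transpose P ** M ** P)"
        using t dt by (simp add: torusM_def GL2_def)
    qed
  next
    show "torusM (transpose P ** M ** P) \<subseteq> conj_set ?Pi (torusM M)"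
    proof
      fix u assume u: "u \<in> torusM (transpose P ** M ** P)"
      let ?t = "P ** u ** ?Pi"
      have dt: "det ?t = det u" by (simp add: det_mul2) (metis dPi mult.assoc mult.commute mult_1_right)
      have "transpose ?t ** M ** ?t
          = transpose ?Pi ** (transpose u ** (transpose P ** M ** P) ** u) ** ?Pi"
        by (simp add: matrix_transpose_mul matrix_mul_assoc)
      also have "\<dots> = transpose ?Pi ** (mat (det u) ** (transpose P ** M ** P)) ** ?Pi"
        using u by (simp add: torusM_def)
      also have "\<dots> = mat (det u) ** (transpose ?Pi ** (transpose P ** M ** P) ** ?Pi)"
      proof -
        have "transpose ?Pi ** (mat (det u) ** (transpose P ** M ** P)) ** ?Pi
           = (transpose ?Pi ** mat (det u)) ** (transpose P ** M ** P) ** ?Pi"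
          by (simp add: matrix_mul_assoc)
        also have "\<dots> = mat (det u) ** (transpose ?Pi ** (transpose P ** M ** P) ** ?Pi)"
          by (simp add: mat_comm[symmetric] matrix_mul_assoc)
        finally show ?thesis .
      qed
      also have "\<dots> = mat (det u) ** ((transpose ?Pi ** transpose P) ** M ** (P ** ?Pi))"
        by (simp add: matrix_mul_assoc)
      also have "\<dots> = mat (det ?t) ** M" by (simp add: rt r dt)
      finally have "?t \<in> torusM M" using u dt by (simp add: torusM_def GL2_def)
      moreover have "u = ?Pi ** ?t ** P"
        by (metis l matrix_mul_assoc matrix_mul_lid matrix_mul_rid)
      ultimately show "u \<in> conj_set ?Pi (torusM M)"
        unfolding conj_set_def ii by auto
    qed
  qed
qed

lemma mat_cancel: "(c::'a::field) \<noteq> 0 \<Longrightarrow> (mat c ** (X::'a mat2) = mat c ** Y) \<longleftrightarrow> X = Y"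
  by (cases X rule: mk2_exhaust, cases Y rule: mk2_exhaust) (simp add: mat_mk2)

lemma torusM_scale: "c \<noteq> 0 \<Longrightarrow> torusM (mat c ** M) = torusM (M::'a::field mat2)"
proof -
  assume c: "c \<noteq> 0"
  have "transpose g ** (mat c ** M) ** g = mat c ** (transpose g ** M ** g)" for g :: "'a mat2"
  proof -
    have "transpose g ** (mat c ** M) ** g = (transpose g ** mat c) ** M ** g"
      by (simp add: matrix_mul_assoc)
    also have "\<dots> = mat c ** (transpose g ** M ** g)"
      by (simp add: mat_comm[symmetric] matrix_mul_assoc)
    finally show ?thesis .
  qed
  moreover have "mat (det g) ** (mat c ** M) = mat c ** (mat (det g) ** M)" for g  :: "'a mat2"
    by (cases M rule: mk2_exhaust) (simp add: mat_mk2 algebra_simps)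
  ultimately show ?thesis unfolding torusM_def using mat_cancel[OF c] by simp
qed



definition ge :: "('a::field \<Rightarrow> int) \<Rightarrow> 'a \<Rightarrow> int \<Rightarrow> bool" where
  "ge v x N \<longleftrightarrow> x = 0 \<or> N \<le> v x"

context
  fixes v :: "'a::field \<Rightarrow> int"
  assumes DV: "discrete_valuation v"
begin

lemma vmul: "x \<noteq> 0 \<Longrightarrow> y \<noteq> 0 \<Longrightarrow> v (x*y) = v x + v y"
  using DV unfolding discrete_valuation_def by blast

lemma vadd: "x \<noteq> 0 \<Longrightarrow> y \<noteq> 0 \<Longrightarrow> x + y \<noteq> 0 \<Longrightarrow> v (x+y) \<ge> min (v x) (v y)"
  using DV unfolding discrete_valuation_def by blast

lemma vsurj: "\<exists>x. x \<noteq> 0 \<and> v x = n"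
  using DV unfolding discrete_valuation_def by blast

lemma v1: "v 1 = 0"
  using vmul[of 1 1] by simp

lemma vneg: "v (-x) = v x"
proof (cases "x = 0")
  case True then show ?thesis by simp
next
  case False
  have "v ((-1)*(-1)) = v (-1) + v (-1)" by (rule vmul) auto
  then have m: "v (-1) = 0" using v1 by simp
  have "v ((-1)*x) = v (-1) + v x" by (rule vmul) (use False in auto)
  then show ?thesis using m by simp
qed

lemma vinv: "x \<noteq> 0 \<Longrightarrow> v (inverse x) = - v x"
  using vmul[of x "inverse x"] v1 by simp

lemma vdiv: "x \<noteq> 0 \<Longrightarrow> y \<noteq> 0 \<Longrightarrow> v (x / y) = v x - v y"
  using vmul[of x "inverse y"] vinv[of y] by (simp add: divide_inverse)

lemma ge_add: "ge v x N \<Longrightarrow> ge v y N \<Longrightarrow> ge v (x+y) N"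
  unfolding ge_def using vadd[of x y] by (cases "x = 0"; cases "y = 0"; cases "x + y = 0") auto

lemma ge_neg: "ge v (-x) N \<longleftrightarrow> ge v x N"
  unfolding ge_def by (simp add: vneg)

lemma ge_diff: "ge v x N \<Longrightarrow> ge v y N \<Longrightarrow> ge v (x-y) N"
  using ge_add[of x N "-y"] ge_neg[of y N] by simp

lemma ge_mul: "ge v x N \<Longrightarrow> ge v y M \<Longrightarrow> ge v (x*y) (N+M)"
  unfolding ge_def using vmul[of x y] by (cases "x = 0"; cases "y = 0") auto

lemma ge_mono: "ge v x N \<Longrightarrow> M \<le> N \<Longrightarrow> ge v x M"
  unfolding ge_def by auto

lemma ge_0[simp]: "ge v 0 N"
  unfolding ge_def by simp

lemma ge_all: "(\<And>N. ge v x N) \<Longrightarrow> x = 0"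
  unfolding ge_def by (metis less_add_one not_le)

lemma v_strict: "v x < v y \<Longrightarrow> x \<noteq> 0 \<Longrightarrow> v (x + y) = v x"
proof (cases "y = 0")
  case True then show ?thesis by simp
next
  case False
  assume lt: "v x < v y" and x: "x \<noteq> 0"
  have s: "x + y \<noteq> 0"
  proof
    assume "x + y = 0" then have "y = -x" by (metis add.commute eq_neg_iff_add_eq_0)
    then show False using lt vneg by simp
  qed
  have a: "v (x+y) \<ge> v x" using vadd[OF x False s] lt by simp
  have "x = (x + y) + (-y)" by simp
  then have "v x \<ge> min (v (x+y)) (v (-y))" using vadd[OF s, of "-y"] False x by (metis neg_equal_0_iff_equal)
  then show ?thesis using a lt vneg[of y] by linarith
qed

lemma unit_pert: "x \<noteq> 0 \<Longrightarrow> v x = 0 \<Longrightarrow> ge v e 1 \<Longrightarrow> x + e \<noteq> 0 \<and> v (x + e) = 0"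
proof -
  assume x: "x \<noteq> 0" "v x = 0" and e: "ge v e 1"
  show ?thesis
  proof (cases "e = 0")
    case True then show ?thesis using x by simp
  next
    case False
    then have "v x < v e" using e x unfolding ge_def by simp
    then have "v (x + e) = 0" using v_strict[of x e] x by simp
    moreover have "x + e \<noteq> 0"
    proof
      assume "x + e = 0" then have "e = -x" by (metis add.commute eq_neg_iff_add_eq_0)
      then show False using \<open>v x < v e\<close> vneg by simp
    qed
    ultimately show ?thesis by simp
  qed
qed

lemma unit_ge: "x \<noteq> 0 \<Longrightarrow> v x = 0 \<Longrightarrow> ge v (y / x) N \<longleftrightarrow> ge v y N"
  unfolding ge_def by (cases "y = 0") (auto simp: vdiv)

lemma unit_ge_mul: "x \<noteq> 0 \<Longrightarrow> v x = 0 \<Longrightarrow> ge v (x * y) N \<longleftrightarrow> ge v y N"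
  unfolding ge_def by (cases "y = 0") (auto simp: vmul)

lemma v_sq: "x \<noteq> 0 \<Longrightarrow> v (x * x) = 2 * v x"
  using vmul by simp

end


lemma ge_unit: "x \<noteq> 0 \<Longrightarrow> v x = 0 \<Longrightarrow> ge v x 0"
  unfolding ge_def by simp

lemma hensel:
  fixes v :: "'a::field \<Rightarrow> int"
  assumes NL: "nonarch_local_field v" and v2: "v 2 = 0" and two: "(2::'a) \<noteq> 0"
    and w: "w \<noteq> 0" "v w = 0" and s: "ge v (w - s * s) 1"
  shows "\<exists>r. w = r*r"
proof -
  have DV: "discrete_valuation v" using NL unfolding nonarch_local_field_def by blast
  have compl: "\<And>s. v_cauchy v s \<Longrightarrow> \<exists>L. v_converges v s L"
    using NL unfolding nonarch_local_field_def by blast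
  have four: "(4::'a) \<noteq> 0" using two by (metis mult_eq_0_iff numeral_Bit0_eq_double one_add_one) 
  define x where "x = rec_nat s (\<lambda>n y. (y + w / y) / 2)"
  have x0: "x 0 = s" and xS: "\<And>n. x (Suc n) = (x n + w / x n) / 2" unfolding x_def by simp_all
  have P: "x n \<noteq> 0 \<and> v (x n) = 0 \<and> ge v (x n * x n - w) (int n + 1)" for n
  proof (induction n)
    case 0
    have e: "ge v (s * s - w) 1" using s ge_neg[OF DV, of "s * s - w"] by simp
    have "w + (s * s - w) \<noteq> 0 \<and> v (w + (s * s - w)) = 0" by (rule unit_pert[OF DV w e])
    then have ss: "s * s \<noteq> 0" "v (s * s) = 0" by simp_all
    then have "s \<noteq> 0" by auto
    then have "v s = 0" using ss v_sq[OF DV, of s] by simp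
    then show ?case using \<open>s \<noteq> 0\<close> e x0 by simp
  next
    case (Suc n)
    define y where "y = x n"
    define e where "e = y*y - w"
    have y: "y \<noteq> 0" "v y = 0" and ee: "ge v e (int n + 1)" using Suc unfolding y_def e_def by auto
    have e1: "ge v e 1" using ge_mono[OF DV ee] by simp
    have u2: "2*y*y \<noteq> 0" "v (2*y*y) = 0" using y two v2 vmul[OF DV] by auto
    have "2*y*y + (-e) \<noteq> 0 \<and> v (2*y*y + (-e)) = 0"
      by (rule unit_pert[OF DV u2]) (simp add: ge_neg[OF DV] e1)
    then have n2: "2*y*y - e \<noteq> 0" "v (2*y*y - e) = 0" by simp_all
    have xs: "x (Suc n) = (2*y*y - e) / (2*y)"
      using y two unfolding xS y_def[symmetric] e_def by (simp add: field_simps)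
    have "x (Suc n) \<noteq> 0" using xs n2 y two by simp
    moreover have "v (x (Suc n)) = 0" using xs n2 y two v2 vdiv[OF DV] vmul[OF DV] by simp
    moreover have "ge v (x (Suc n) * x (Suc n) - w) (int (Suc n) + 1)"
    proof -
      have id: "x (Suc n) * x (Suc n) - w = (e*e) / (4*(y*y))"
        using y two four unfolding xs e_def by (simp add: field_simps)
      have v4: "v (4::'a) = 0" using vmul[OF DV, of 2 2] two v2 by simp
      have u4: "4*(y*y) \<noteq> 0" "v (4*(y*y)) = 0" using y four v4 vmul[OF DV, of 4 "y*y"] vmul[OF DV, of y y] by auto
      have "ge v (e*e) ((int n + 1) + (int n + 1))" by (rule ge_mul[OF DV ee ee])
      then have "ge v (e*e) (int (Suc n) + 1)" by (rule ge_mono[OF DV]) simp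
      then show ?thesis unfolding id using unit_ge[OF DV u4] by simp
    qed
    ultimately show ?case by simp
  qed
  have step: "ge v (x (Suc n) - x n) (int n + 1)" for n
  proof -
    have y: "x n \<noteq> 0" "v (x n) = 0" and ee: "ge v (x n * x n - w) (int n + 1)" using P by auto
    have "x (Suc n) - x n = - ((x n * x n - w) / (2 * x n))"
      using y two unfolding xS by (simp add: field_simps)
    moreover have "2 * x n \<noteq> 0" "v (2 * x n) = 0" using y two v2 vmul[OF DV] by auto
    ultimately show ?thesis using ee unit_ge[OF DV] ge_neg[OF DV] by simp
  qed
  have cauchy: "m \<ge> n \<Longrightarrow> ge v (x m - x n) (int n + 1)" for m n
  proof (induction m rule: dec_induct)
    case base then show ?case by (simp add: ge_def)
  next
    case (step m)
    have eq: "x (Suc m) - x n = (x (Suc m) - x m) + (x m - x n)" by simp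
    have "ge v (x (Suc m) - x m) (int n + 1)"
      using ge_mono[OF DV \<open>ge v (x (Suc m) - x m) (int m + 1)\<close>] step(1) by simp
    from ge_add[OF DV this step(3)] show ?case unfolding eq .
  qed
  have "v_cauchy v x"
    unfolding v_cauchy_def
  proof (intro allI)
    fix N :: int
    show "\<exists>M. \<forall>m\<ge>M. \<forall>n\<ge>M. x m = x n \<or> N \<le> v (x m - x n)"
    proof (intro exI allI impI)
      fix m n assume mn: "nat N \<le> m" "nat N \<le> n"
      show "x m = x n \<or> N \<le> v (x m - x n)"
      proof (cases "n \<le> m")
        case True
        then have "ge v (x m - x n) (int n + 1)" by (rule cauchy)
        then have "ge v (x m - x n) N" by (rule ge_mono[OF DV]) (use mn in linarith)
        then show ?thesis unfolding ge_def by simp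
      next
        case False
        then have "ge v (x n - x m) (int m + 1)" by (intro cauchy) simp
        then have "ge v (x n - x m) N" by (rule ge_mono[OF DV]) (use mn in linarith)
        then have "ge v (-(x m - x n)) N" by simp
        then show ?thesis unfolding ge_def ge_neg[OF DV] using vneg[OF DV, of "x m - x n"] by auto
      qed
    qed
  qed
  then obtain L where L: "v_converges v x L" using compl by blast
  have "ge v (L*L - w) N" for N
  proof -
    obtain M where M: "\<forall>n\<ge>M. x n = L \<or> max N 0 \<le> v (x n - L)"
      using L unfolding v_converges_def by blast
    define n where "n = max M (nat N)"
    have a: "ge v (x n - L) (max N 0)" using M unfolding n_def ge_def by auto
    then have a': "ge v (L - x n) (max N 0)" using ge_neg[OF DV, of "L - x n"] by simp
    have y: "x n \<noteq> 0" "v (x n) = 0" and ee: "ge v (x n * x n - w) (int n + 1)" using P by auto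
    have "ge v (2 * x n) 0" using y two v2 vmul[OF DV] unfolding ge_def by auto
    moreover have "ge v (L - x n) 0" using ge_mono[OF DV a'] by simp
    ultimately have "ge v ((L - x n) + 2 * x n) 0" using ge_add[OF DV] by blast
    then have b: "ge v (L + x n) 0" by (simp add: algebra_simps)
    have "ge v ((L - x n) * (L + x n)) (max N 0 + 0)" by (rule ge_mul[OF DV a' b])
    then have c1: "ge v ((L - x n) * (L + x n)) N" by (rule ge_mono[OF DV]) simp
    have c2: "ge v (x n * x n - w) N" by (rule ge_mono[OF DV ee]) (simp add: n_def)
    have eq: "L*L - w = (L - x n) * (L + x n) + (x n * x n - w)" by (simp add: algebra_simps)
    from ge_add[OF DV c1 c2] show ?thesis unfolding eq .
  qed
  then have "L*L - w = 0" by (rule ge_all[OF DV])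
  then show ?thesis by auto
qed



lemma inv_even:
  assumes "finite A" "\<forall>x\<in>A. h x \<in> A \<and> h (h x) = x \<and> h x \<noteq> x"
  shows "even (card A)"
  using assms
proof (induction "card A" arbitrary: A rule: less_induct)
  case less
  show ?case
  proof (cases "A = {}")
    case True then show ?thesis by simp
  next
    case False
    then obtain x where x: "x \<in> A" by blast
    let ?B = "A - {x, h x}"
    have hx: "h x \<in> A" "h x \<noteq> x" "h (h x) = x" using less.prems x by auto
    have cB: "card A = card ?B + 2"
    proof -
      have "card ?B = card A - card {x, h x}" using less.prems(1) x hx
        by (subst card_Diff_subset) auto
      moreover have "card {x, h x} = 2" using hx by simp
      moreover have "card A \<ge> 2" using less.prems(1) x hx
        by (metis \<open>card {x, h x} = 2\<close> card_mono empty_subsetI insert_subset)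
      ultimately show ?thesis by simp
    qed
    have "even (card ?B)"
    proof (rule less.hyps)
      show "card ?B < card A" using cB by simp
      show "finite ?B" using less.prems by simp
      show "\<forall>y\<in>?B. h y \<in> ?B \<and> h (h y) = y \<and> h y \<noteq> y"
      proof
        fix y assume y: "y \<in> ?B"
        then have "h y \<in> A" "h (h y) = y" "h y \<noteq> y" using less.prems by auto
        moreover have "h y \<noteq> x" using y hx \<open>h (h y) = y\<close> by auto
        moreover have "h y \<noteq> h x" using y hx \<open>h (h y) = y\<close> by (metis Diff_iff insertCI)
        ultimately show "h y \<in> ?B \<and> h (h y) = y \<and> h y \<noteq> y" by auto
      qed
    qed
    then show ?thesis using cB by simp
  qed
qed

definition rp :: "('a::field \<Rightarrow> int) \<Rightarrow> 'a set \<Rightarrow> 'a \<Rightarrow> 'a" where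
  "rp v R x = (SOME r. r \<in> R \<and> ge v (x - r) 1)"

context
  fixes v :: "'a::field \<Rightarrow> int" and R :: "'a set"
  assumes DV: "discrete_valuation v"
    and finR: "finite R"
    and R1: "\<And>r. r \<in> R \<Longrightarrow> ge v r 0"
    and R2: "\<And>x. ge v x 0 \<Longrightarrow> \<exists>r\<in>R. ge v (x - r) 1"
    and R3: "\<And>r1 r2. r1 \<in> R \<Longrightarrow> r2 \<in> R \<Longrightarrow> ge v (r1 - r2) 1 \<Longrightarrow> r1 = r2"
begin

lemma rp: "ge v x 0 \<Longrightarrow> rp v R x \<in> R \<and> ge v (x - rp v R x) 1"
  unfolding rp_def using R2[of x] by (metis (mono_tags, lifting) someI_ex)

lemma cong_trans: "ge v (x - y) 1 \<Longrightarrow> ge v (y - z) 1 \<Longrightarrow> ge v (x - z) 1"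
  using ge_add[OF DV, of "x - y" 1 "y - z"] by simp

lemma cong_sym: "ge v (x - y) N \<Longrightarrow> ge v (y - x) N"
  using ge_neg[OF DV, of "x - y"] by simp

lemma unit_iff: "ge v x 0 \<and> \<not> ge v x 1 \<longleftrightarrow> x \<noteq> 0 \<and> v x = 0"
  unfolding ge_def by auto

lemma cong_unit: "\<not> ge v x 1 \<Longrightarrow> ge v (x - y) 1 \<Longrightarrow> \<not> ge v y 1"
  using ge_add[OF DV, of "x - y" 1 y] by auto

lemma prime_p: "ge v x 0 \<Longrightarrow> ge v y 0 \<Longrightarrow> ge v (x*y) 1 \<Longrightarrow> ge v x 1 \<or> ge v y 1"
  unfolding ge_def using vmul[OF DV, of x y] by (cases "x = 0"; cases "y = 0") auto

lemma no_even_hyp: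
  assumes two1: "ge v 2 1"
  shows "even (card R)"
proof -
  define h where "h r = rp v R (r + 1)" for r
  have one0: "ge v (1::'a) 0" unfolding ge_def using v1[OF DV] by simp
  have one1: "\<not> ge v (1::'a) 1" unfolding ge_def using v1[OF DV] by simp
  show ?thesis
  proof (rule inv_even[OF finR, of h], intro ballI conjI)
    fix r assume r: "r \<in> R"
    have r1: "ge v (r + 1) 0" using ge_add[OF DV R1[OF r] one0] .
    have hr: "h r \<in> R" "ge v (r + 1 - h r) 1" using rp[OF r1] unfolding h_def by auto
    show "h r \<in> R" by (rule hr(1))
    have hr1: "ge v (h r + 1) 0" using ge_add[OF DV R1[OF hr(1)] one0] .
    have hh: "h (h r) \<in> R" "ge v (h r + 1 - h (h r)) 1" using rp[OF hr1] unfolding h_def by auto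
    have "ge v ((h r + 1 - h (h r)) + (r + 1 - h r) - 2) 1"
      using ge_diff[OF DV ge_add[OF DV hh(2) hr(2)] two1] .
    then have "ge v (r - h (h r)) 1" by (simp add: algebra_simps)
    then show "h (h r) = r" using R3[OF hh(1) r] cong_sym by blast
    show "h r \<noteq> r"
    proof
      assume "h r = r"
      then have "ge v 1 1" using hr(2) by simp
      then show False using one1 by simp
    qed
  qed
qed


lemma sq_class:
  assumes a: "ge v a 0" "\<not> ge v a 1" "\<not> (\<exists>t. ge v (a - t * t) 1)"
      and b: "ge v b 0" "\<not> ge v b 1" "\<not> (\<exists>t. ge v (b - t * t) 1)"
  shows "\<exists>t. ge v (a * b - t * t) 1"
proof -
  define U where "U = {r \<in> R. \<not> ge v r 1}"
  define Sq where "Sq = {r \<in> U. \<exists>t. ge v (r - t * t) 1}"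
  define Nq where "Nq = U - Sq"
  have finU: "finite U" using finR unfolding U_def by simp
  have SqU: "Sq \<subseteq> U" unfolding Sq_def by auto
  have finSq: "finite Sq" using finU SqU finite_subset by blast
  have cNq: "card Nq = card U - card Sq" unfolding Nq_def using card_Diff_subset[OF finSq SqU] .
  define g where "g r = rp v R (r * r)" for r
  have gU: "g r \<in> Sq" if r: "r \<in> U" for r
  proof -
    have r0: "ge v r 0" using r R1 unfolding U_def by auto
    have rr0: "ge v (r * r) 0" using ge_mul[OF DV r0 r0] by simp
    have gr: "g r \<in> R" "ge v (r * r - g r) 1" using rp[OF rr0] unfolding g_def by auto
    have "\<not> ge v (r * r) 1" using prime_p[OF r0 r0] r unfolding U_def by auto
    then have gu: "\<not> ge v (g r) 1" by (rule cong_unit[OF _ gr(2)])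
    have "ge v (g r - r * r) 1" using cong_sym[OF gr(2)] .
    then have "\<exists>t. ge v (g r - t * t) 1" by (rule exI)
    then show ?thesis using gr(1) gu unfolding Sq_def U_def by simp
  qed
  have fib: "card {r \<in> U. g r = s0} \<le> 2" for s0
  proof (cases "{r \<in> U. g r = s0} = {}")
    case True then show ?thesis unfolding True by simp
  next
    case False
    then obtain r1 where r1: "r1 \<in> U" "g r1 = s0" by blast
    have r10: "ge v r1 0" using r1 R1 unfolding U_def by auto
    have "{r \<in> U. g r = s0} \<subseteq> {r1, rp v R (- r1)}"
    proof
      fix r assume r: "r \<in> {r \<in> U. g r = s0}"
      have r0: "ge v r 0" using r R1 unfolding U_def by auto
      have rR: "r \<in> R" using r unfolding U_def by auto
      have rr: "ge v (r * r) 0" using ge_mul[OF DV r0 r0] by simp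
      have rr1: "ge v (r1 * r1) 0" using ge_mul[OF DV r10 r10] by simp
      have c1: "ge v (r * r - g r) 1" using rp[OF rr] unfolding g_def by simp
      have c2: "ge v (r1 * r1 - g r1) 1" using rp[OF rr1] unfolding g_def by simp
      have "ge v ((r * r - g r) - (r1 * r1 - g r1)) 1" using ge_diff[OF DV c1 c2] .
      then have "ge v ((r - r1) * (r + r1)) 1" using r r1 by (simp add: algebra_simps)
      moreover have "ge v (r - r1) 0" "ge v (r + r1) 0"
        using ge_diff[OF DV r0 r10] ge_add[OF DV r0 r10] by auto
      ultimately have "ge v (r - r1) 1 \<or> ge v (r + r1) 1" by (intro prime_p)
      then show "r \<in> {r1, rp v R (- r1)}"
      proof
        assume "ge v (r - r1) 1" then have "r = r1" using R3[OF rR] r1 unfolding U_def by auto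
        then show ?thesis by simp
      next
        assume h: "ge v (r + r1) 1"
        have m0: "ge v (- r1) 0" using r10 ge_neg[OF DV] by simp
        have q: "rp v R (- r1) \<in> R" "ge v (- r1 - rp v R (- r1)) 1" using rp[OF m0] by auto
        have "ge v ((r + r1) + (- r1 - rp v R (- r1))) 1" using ge_add[OF DV h q(2)] .
        then have "r = rp v R (- r1)" using R3[OF rR q(1)] by (simp add: algebra_simps)
        then show ?thesis by simp
      qed
    qed
    then have "card {r \<in> U. g r = s0} \<le> card {r1, rp v R (- r1)}" by (rule card_mono[rotated]) simp
    also have "\<dots> \<le> 2" by (simp add: card_insert_if)
    finally show ?thesis .
  qed
  have "U = (\<Union>s0\<in>Sq. {r \<in> U. g r = s0})"
  proof
    show "U \<subseteq> (\<Union>s0\<in>Sq. {r \<in> U. g r = s0})"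
    proof
      fix r assume "r \<in> U"
      then show "r \<in> (\<Union>s0\<in>Sq. {r \<in> U. g r = s0})" using gU[of r] by (intro UN_I[of "g r"]) simp_all
    qed
  qed auto
  then have "card U \<le> (\<Sum>s0\<in>Sq. card {r \<in> U. g r = s0})"
    using card_UN_le[OF finSq, of "\<lambda>s0. {r \<in> U. g r = s0}"] by simp
  also have "\<dots> \<le> (\<Sum>s0\<in>Sq. 2)" by (rule sum_mono) (rule fib)
  finally have cU: "card U \<le> 2 * card Sq" by simp
  define f where "f r = rp v R (a * r)" for r
  have fprop: "f r \<in> U \<and> ge v (a * r - f r) 1" if r: "r \<in> U" for r
  proof -
    have r0: "ge v r 0" using r R1 unfolding U_def by auto
    have ar0: "ge v (a * r) 0" using ge_mul[OF DV a(1) r0] by simp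
    have fr: "f r \<in> R" "ge v (a * r - f r) 1" using rp[OF ar0] unfolding f_def by auto
    have "\<not> ge v (a * r) 1" using prime_p[OF a(1) r0] r a(2) unfolding U_def by auto
    then have "\<not> ge v (f r) 1" by (rule cong_unit[OF _ fr(2)])
    then show ?thesis using fr unfolding U_def by auto
  qed
  have finj: "inj_on f U"
  proof (rule inj_onI)
    fix r1 r2 assume r: "r1 \<in> U" "r2 \<in> U" "f r1 = f r2"
    have "ge v ((a * r1 - f r1) - (a * r2 - f r2)) 1"
      using ge_diff[OF DV conjunct2[OF fprop[OF r(1)]] conjunct2[OF fprop[OF r(2)]]] .
    then have "ge v (a * (r1 - r2)) 1" using r(3) by (simp add: algebra_simps)
    moreover have "ge v (r1 - r2) 0" using ge_diff[OF DV] R1 r(1,2) unfolding U_def by auto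
    ultimately have "ge v a 1 \<or> ge v (r1 - r2) 1" by (intro prime_p[OF a(1)])
    then have "ge v (r1 - r2) 1" using a(2) by simp
    then show "r1 = r2" using R3 r(1,2) unfolding U_def by auto
  qed
  have fSq: "f ` Sq \<subseteq> Nq"
  proof
    fix y assume "y \<in> f ` Sq"
    then obtain r where r: "r \<in> Sq" "y = f r" by blast
    have rU: "r \<in> U" using r SqU by auto
    obtain t where t: "ge v (r - t * t) 1" using r unfolding Sq_def by auto
    have r0: "ge v r 0" "\<not> ge v r 1" using rU R1 unfolding U_def by auto
    have tt: "\<not> ge v (t * t) 1" using cong_unit[OF r0(2) t] .
    have tr: "ge v (t * t - r) 0" using ge_mono[OF DV cong_sym[OF t]] by simp
    have tt0: "ge v (t * t) 0" using ge_add[OF DV tr r0(1)] by simp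
    have ttu: "t * t \<noteq> 0" "v (t * t) = 0" using unit_iff[of "t * t"] tt tt0 by simp_all
    have "y \<notin> Sq"
    proof
      assume "y \<in> Sq"
      then obtain s where s: "ge v (y - s * s) 1" unfolding Sq_def by auto
      have fr: "ge v (a * r - y) 1" using fprop[OF rU] r by simp
      have at: "ge v (a * (t * t - r)) 1"
        using ge_mul[OF DV a(1) cong_sym[OF t]] by simp
      have "ge v (a * (t * t - r) + (a * r - y) + (y - s * s)) 1"
        using ge_add[OF DV ge_add[OF DV at fr] s] .
      then have "ge v (a * (t * t) - s * s) 1" by (simp add: algebra_simps)
      then have "ge v ((a * (t * t) - s * s) / (t * t)) 1" using unit_ge[OF DV ttu] by simp
      moreover have "(a * (t * t) - s * s) / (t * t) = a - (s / t) * (s / t)"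
        using ttu by (simp add: field_simps)
      ultimately have "ge v (a - (s / t) * (s / t)) 1" by simp
      then show False using a(3) by blast
    qed
    then show "y \<in> Nq" using fprop[OF rU] r unfolding Nq_def by auto
  qed
  have finNq: "finite Nq" using finU unfolding Nq_def by simp
  have "card Sq = card (f ` Sq)" using card_image[OF inj_on_subset[OF finj SqU]] by simp
  also have "\<dots> \<le> card Nq" using card_mono[OF finNq fSq] .
  finally have "card Sq \<le> card Nq" .
  then have eqc: "card (f ` Sq) = card Nq" using cU cNq card_image[OF inj_on_subset[OF finj SqU]]
    card_mono[OF finNq fSq] by linarith
  have fSqe: "f ` Sq = Nq" using card_subset_eq[OF finNq fSq eqc] .
  have rb: "rp v R b \<in> R" "ge v (b - rp v R b) 1" using rp[OF b(1)] by auto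
  have rbU: "rp v R b \<in> U" using rb cong_unit[OF b(2) rb(2)] unfolding U_def by auto
  have rbN: "rp v R b \<notin> Sq"
  proof
    assume "rp v R b \<in> Sq"
    then obtain t where "ge v (rp v R b - t * t) 1" unfolding Sq_def by auto
    then have "ge v (b - t * t) 1" by (rule cong_trans[OF rb(2)])
    then show False using b(3) by simp
  qed
  have "f (rp v R b) \<notin> Nq"
  proof
    assume "f (rp v R b) \<in> Nq"
    then have "f (rp v R b) \<in> f ` Sq" using fSqe by simp
    then obtain r' where "r' \<in> Sq" "f (rp v R b) = f r'" by (auto simp: image_iff)
    moreover have "r' \<in> U" using \<open>r' \<in> Sq\<close> SqU by auto
    ultimately have "rp v R b = r'" using inj_onD[OF finj _ rbU] by simp
    then show False using rbN \<open>r' \<in> Sq\<close> by simp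
  qed
  then have "f (rp v R b) \<in> Sq" using fprop[OF rbU] unfolding Nq_def by auto
  then obtain t where t: "ge v (f (rp v R b) - t * t) 1" unfolding Sq_def by auto
  have x1: "ge v (a * (b - rp v R b)) 1" using ge_mul[OF DV a(1) rb(2)] by simp
  have x2: "ge v (a * rp v R b - f (rp v R b)) 1" using fprop[OF rbU] by simp
  have "ge v (a * (b - rp v R b) + (a * rp v R b - f (rp v R b)) + (f (rp v R b) - t * t)) 1"
    using ge_add[OF DV ge_add[OF DV x1 x2] t] .
  then have "ge v (a * b - t * t) 1" by (simp add: algebra_simps)
  then show ?thesis by blast
qed

end



lemma int_ring_ge: "int_ring v = {x. ge v x 0}"
  unfolding int_ring_def ge_def by auto

lemma max_ideal_ge: "max_ideal v = {x. ge v x 1}"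
  unfolding max_ideal_def ge_def by auto

lemma exists_R:
  fixes v :: "'a::field \<Rightarrow> int"
  assumes DV: "discrete_valuation v" and fin: "finite (residue_field v)"
  shows "\<exists>R. finite R \<and> card R = card (residue_field v) \<and> (\<forall>r\<in>R. ge v r 0) \<and>
     (\<forall>x. ge v x 0 \<longrightarrow> (\<exists>r\<in>R. ge v (x - r) 1)) \<and>
     (\<forall>r1\<in>R. \<forall>r2\<in>R. ge v (r1 - r2) 1 \<longrightarrow> r1 = r2)"
proof -
  define cls where "cls x = {y. ge v y 0 \<and> ge v (y - x) 1}" for x
  have RF: "residue_field v = cls ` {x. ge v x 0}"
    unfolding residue_field_def int_ring_ge max_ideal_ge cls_def by auto
  define rep where "rep C = (SOME x. ge v x 0 \<and> C = cls x)" for C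
  have rep: "ge v (rep C) 0 \<and> cls (rep C) = C" if "C \<in> residue_field v" for C
  proof -
    have "\<exists>x. ge v x 0 \<and> C = cls x" using that RF by auto
    then have "ge v (rep C) 0 \<and> C = cls (rep C)" unfolding rep_def by (rule someI_ex)
    then show ?thesis by simp
  qed
  have tr: "ge v (x - z) 1" if "ge v (x - y) 1" "ge v (y - z) 1" for x y z
    using ge_add[OF DV that] by simp
  have sy: "ge v (y - x) 1" if "ge v (x - y) 1" for x y
    using ge_neg[OF DV, of "x - y"] that by simp
  have self: "x \<in> cls x" if "ge v x 0" for x unfolding cls_def using that by (simp add: ge_def)
  have clseq: "cls x = cls y" if "ge v (x - y) 1" for x y
    unfolding cls_def using tr sy that by blast
  define R where "R = rep ` residue_field v"
  have inj: "inj_on rep (residue_field v)" by (metis inj_onI rep)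
  show ?thesis
  proof (intro exI conjI ballI allI impI)
    show "finite R" unfolding R_def using fin by simp
    show "card R = card (residue_field v)" unfolding R_def using card_image[OF inj] .
    show "ge v r 0" if "r \<in> R" for r using that rep unfolding R_def by auto
    show "\<exists>r\<in>R. ge v (x - r) 1" if x: "ge v x 0" for x
    proof -
      have C: "cls x \<in> residue_field v" using RF x by auto
      have "x \<in> cls (rep (cls x))" using rep[OF C] self[OF x] by simp
      then have "ge v (x - rep (cls x)) 1" unfolding cls_def by simp
      then show ?thesis unfolding R_def using C by blast
    qed
    show "r1 = r2" if h: "r1 \<in> R" "r2 \<in> R" "ge v (r1 - r2) 1" for r1 r2
    proof -
      obtain C1 C2 where C: "C1 \<in> residue_field v" "C2 \<in> residue_field v" "r1 = rep C1" "r2 = rep C2"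
        using h(1,2) unfolding R_def by auto
      have "C1 = C2" using rep[OF C(1)] rep[OF C(2)] clseq[OF h(3)] C(3,4) by simp
      then show ?thesis using C by simp
    qed
  qed
qed

lemma v2:
  fixes v :: "'a::field_char_0 \<Rightarrow> int"
  assumes NL: "nonarch_local_field v" and odd: "odd (card (residue_field v))"
  shows "v 2 = 0"
proof -
  have DV: "discrete_valuation v" using NL unfolding nonarch_local_field_def by blast
  have fin: "finite (residue_field v)" using odd by (cases "finite (residue_field v)") auto
  obtain R where "finite R \<and> card R = card (residue_field v) \<and> (\<forall>r\<in>R. ge v r 0) \<and>
     (\<forall>x. ge v x 0 \<longrightarrow> (\<exists>r\<in>R. ge v (x - r) 1)) \<and> (\<forall>r1\<in>R. \<forall>r2\<in>R. ge v (r1 - r2) 1 \<longrightarrow> r1 = r2)"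
    using exists_R[OF DV fin] by (rule exE)
  then have R: "finite R" "card R = card (residue_field v)" "\<forall>r\<in>R. ge v r 0"
     "\<forall>x. ge v x 0 \<longrightarrow> (\<exists>r\<in>R. ge v (x - r) 1)" "\<forall>r1\<in>R. \<forall>r2\<in>R. ge v (r1 - r2) 1 \<longrightarrow> r1 = r2"
    by simp_all
  have one: "ge v (1::'a) 0" unfolding ge_def using v1[OF DV] by simp
  have two0: "ge v (2::'a) 0" using ge_add[OF DV one one] by (simp add: one_add_one)
  show ?thesis
  proof (rule ccontr)
    assume "v 2 \<noteq> 0"
    then have "ge v (2::'a) 1" using two0 unfolding ge_def by auto
    then have "even (card R)"
    proof (rule no_even_hyp[OF DV R(1), rotated 3])
      show "ge v r 0" if "r \<in> R" for r using R(3) that by blast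
      show "\<exists>r\<in>R. ge v (x - r) 1" if "ge v x 0" for x using R(4) that by blast
      show "r1 = r2" if "r1 \<in> R" "r2 \<in> R" "ge v (r1 - r2) 1" for r1 r2 using R(5) that by blast
    qed
    then show False using R(2) odd by simp
  qed
qed

lemma nonsq_mod:
  fixes v :: "'a::field_char_0 \<Rightarrow> int"
  assumes NL: "nonarch_local_field v" and odd: "odd (card (residue_field v))"
    and w: "w \<noteq> 0" "v w = 0" and ns: "\<not> (\<exists>r. w = r * r)"
  shows "\<not> ge v (w - t * t) 1"
  using hensel[OF NL v2[OF NL odd] _ w, of t] ns by auto

lemma sq_units:
  fixes v :: "'a::field_char_0 \<Rightarrow> int"
  assumes NL: "nonarch_local_field v" and odd: "odd (card (residue_field v))"
    and a: "a \<noteq> 0" "v a = 0" "\<not> (\<exists>r. a = r * r)"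
    and b: "b \<noteq> 0" "v b = 0" "\<not> (\<exists>r. b = r * r)"
  shows "\<exists>r. a * b = r * r"
proof -
  have DV: "discrete_valuation v" using NL unfolding nonarch_local_field_def by blast
  have fin: "finite (residue_field v)" using odd by (cases "finite (residue_field v)") auto
  obtain R where "finite R \<and> card R = card (residue_field v) \<and> (\<forall>r\<in>R. ge v r 0) \<and>
     (\<forall>x. ge v x 0 \<longrightarrow> (\<exists>r\<in>R. ge v (x - r) 1)) \<and> (\<forall>r1\<in>R. \<forall>r2\<in>R. ge v (r1 - r2) 1 \<longrightarrow> r1 = r2)"
    using exists_R[OF DV fin] by (rule exE)
  then have R: "finite R" "card R = card (residue_field v)" "\<forall>r\<in>R. ge v r 0"
     "\<forall>x. ge v x 0 \<longrightarrow> (\<exists>r\<in>R. ge v (x - r) 1)" "\<forall>r1\<in>R. \<forall>r2\<in>R. ge v (r1 - r2) 1 \<longrightarrow> r1 = r2"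
    by simp_all
  have a': "ge v a 0" "\<not> ge v a 1" using a unfolding ge_def by auto
  have b': "ge v b 0" "\<not> ge v b 1" using b unfolding ge_def by auto
  have "\<exists>t. ge v (a * b - t * t) 1"
  proof (rule sq_class[OF DV R(1) _ _ _ a' _ b'])
    show "ge v r 0" if "r \<in> R" for r using R(3) that by blast
    show "\<exists>r\<in>R. ge v (x - r) 1" if "ge v x 0" for x using R(4) that by blast
    show "r1 = r2" if "r1 \<in> R" "r2 \<in> R" "ge v (r1 - r2) 1" for r1 r2 using R(5) that by blast
    show "\<not> (\<exists>t. ge v (a - t * t) 1)" using nonsq_mod[OF NL odd a] by blast
    show "\<not> (\<exists>t. ge v (b - t * t) 1)" using nonsq_mod[OF NL odd b] by blast
  qed
  then obtain t where t: "ge v (a * b - t * t) 1" by blast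
  have ab: "a * b \<noteq> 0" "v (a * b) = 0" using a b vmul[OF DV] by auto
  show ?thesis by (rule hensel[OF NL v2[OF NL odd] _ ab t]) simp
qed



lemma torus01: "mk2 a b c d \<in> torus \<alpha> 0 1 \<longleftrightarrow> a*d - b*c \<noteq> 0 \<and> d = a \<and> c = -(\<alpha>*b)"
  if "\<alpha> \<noteq> 0"
  using that unfolding torus_mk2 by (auto simp: algebra_simps) (metis add.commute add_eq_0_iff2 mult.commute)

lemma torus01': "t \<in> torus \<alpha> 0 1 \<longleftrightarrow> (\<exists>a b. t = mk2 a b (-(\<alpha>*b)) a \<and> a*a + \<alpha>*(b*b) \<noteq> 0)"
  if "\<alpha> \<noteq> 0"
proof -
  obtain a b c d where t: "t = mk2 a b c d" by (rule mk2_exhaust)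
  show ?thesis unfolding t torus01[OF that] by (auto simp: algebra_simps add_eq_0_iff2)
qed

lemma torus_GL2: "torus \<alpha> \<beta> \<gamma> \<subseteq> GL2"
  unfolding torus_def by auto

lemma conj_comp:
  fixes g h :: "'a::field mat2"
  assumes "det g \<noteq> 0" "det h \<noteq> 0"
  shows "conj_set g (conj_set h T) = conj_set (g ** h) T"
proof -
  have "matrix_inv (g ** h) = matrix_inv h ** matrix_inv g"
  proof (rule inv_unique)
    show "g ** h ** (matrix_inv h ** matrix_inv g) = mat 1"
      by (metis assms inv_r matrix_mul_assoc matrix_mul_rid)
    show "det (g ** h) \<noteq> 0" using assms by (simp add: det_mul2)
  qed
  then show ?thesis unfolding conj_set_def image_image by (simp add: matrix_mul_assoc)
qed

lemma conj_one: "conj_set (mat 1) T = (T::'a::field mat2 set)"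
proof -
  have "matrix_inv (mat 1 :: 'a mat2) = mat 1" by (rule inv_unique) (simp_all add: mat_mk2)
  then show ?thesis unfolding conj_set_def by simp
qed

lemma conj_inv:
  fixes g :: "'a::field mat2"
  assumes "det g \<noteq> 0"
  shows "conj_set (matrix_inv g) (conj_set g T) = T"
  using conj_comp[of "matrix_inv g" g T] assms det_inv[OF assms] inv_l[OF assms] conj_one by simp

lemma conj_a_mat:
  fixes y \<alpha> :: "'a::field_char_0"
  assumes y: "y \<noteq> 0"
  shows "conj_set (a_mat y) (torus \<alpha> 0 1) = torus (\<alpha> / (y*y)) 0 1"
proof -
  have "a_mat y = matrix_inv (a_mat (1/y))"
    unfolding a_mat_def using y by (simp add: mk2_inv)
  moreover have "transpose (a_mat (1/y)) ** Smat \<alpha> 0 1 ** a_mat (1/y) = Smat (\<alpha> / (y*y)) 0 1"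
    unfolding a_mat_def Smat_def by simp
  ultimately show ?thesis unfolding torus_torusM
    using conj_torusM[of "a_mat (1/y)" "Smat \<alpha> 0 1"] y by (simp add: a_mat_def)
qed


lemma diag_conj:
  fixes \<alpha> \<beta> \<gamma> t :: "'a::field_char_0"
  assumes g: "\<gamma> \<noteq> 0" and t: "t \<noteq> 0"
  defines "P \<equiv> mk2 t 0 (-(\<beta>*t)/(2*\<gamma>)) 1"
  shows "conj_set (matrix_inv P) (torus \<alpha> \<beta> \<gamma>) = torus (-(t*t)*(\<beta>^2 - 4*\<alpha>*\<gamma>)/(4*(\<gamma>*\<gamma>))) 0 1"
    and "matrix_inv P \<in> GL2"
proof -
  have "transpose P ** Smat \<alpha> \<beta> \<gamma> ** P = mat \<gamma> ** Smat (-(t*t)*(\<beta>^2 - 4*\<alpha>*\<gamma>)/(4*(\<gamma>*\<gamma>))) 0 1"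
    unfolding P_def Smat_def using g by (simp add: mat_mk2 field_simps power2_eq_square)
  moreover have "det P \<noteq> 0" unfolding P_def using t by simp
  ultimately show "conj_set (matrix_inv P) (torus \<alpha> \<beta> \<gamma>) = torus (-(t*t)*(\<beta>^2 - 4*\<alpha>*\<gamma>)/(4*(\<gamma>*\<gamma>))) 0 1"
    unfolding torus_torusM using conj_torusM torusM_scale g by metis
  show "matrix_inv P \<in> GL2" unfolding GL2_def using det_inv[OF \<open>det P \<noteq> 0\<close>] \<open>det P \<noteq> 0\<close> by simp
qed

lemma canon_of:
  fixes v :: "'a::field_char_0 \<Rightarrow> int"
  assumes NL: "nonarch_local_field v" and odd: "odd (card (residue_field v))"
    and a: "\<alpha> \<noteq> 0" "v \<alpha> = 0" "\<not> (\<exists>r. -\<alpha> = r * r)"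
  shows "canonical_inert v (torus \<alpha> 0 1)"
proof -
  have DV: "discrete_valuation v" using NL unfolding nonarch_local_field_def by blast
  have v2: "v 2 = 0" by (rule v2[OF NL odd])
  have v4: "v (4::'a) = 0" using vmul[OF DV, of 2 2] v2 by simp
  have ns: "\<not> is_square (0^2 - 4*\<alpha>*1)"
  proof
    assume "is_square (0^2 - 4*\<alpha>*1)"
    then obtain r where "0^2 - 4*\<alpha>*1 = r * r" unfolding is_square_def by blast
    then have "-\<alpha> = (r/2) * (r/2)" by (simp add: field_simps)
    then show False using a(3) by blast
  qed
  have "v (0^2 - 4*\<alpha>*1) = v (4 * (-\<alpha>))" by simp
  also have "\<dots> = 0" using vmul[OF DV, of 4 "-\<alpha>"] v4 vneg[OF DV] a by simp
  finally have ev: "even (v (0^2 - 4*\<alpha>*1))" by simp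
  have "inert_torus v (torus \<alpha> 0 1)" unfolding inert_torus_def using ns ev by blast
  moreover have "\<not> (\<exists>u \<in> int_units v. -\<alpha> = u * u)" using a(3) by blast
  moreover have "\<alpha> \<in> int_units v" using a unfolding int_units_def by simp
  ultimately show ?thesis unfolding canonical_inert_def by blast
qed

lemma part2:
  fixes v :: "'a::field_char_0 \<Rightarrow> int"
  assumes NL: "nonarch_local_field v" and odd: "odd (card (residue_field v))"
    and ns: "\<not> is_square (\<beta>^2 - 4*\<alpha>*\<gamma>)" and ev: "even (v (\<beta>^2 - 4*\<alpha>*\<gamma>))"
  shows "\<exists>g\<in>GL2. canonical_inert v (conj_set g (torus \<alpha> \<beta> \<gamma>))"
proof -
  have DV: "discrete_valuation v" using NL unfolding nonarch_local_field_def by blast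
  have v2: "v 2 = 0" by (rule v2[OF NL odd])
  have v4: "v (4::'a) = 0" using vmul[OF DV, of 2 2] v2 by simp
  define \<delta> where "\<delta> = \<beta>^2 - 4*\<alpha>*\<gamma>"
  have d0: "\<delta> \<noteq> 0" using ns unfolding \<delta>_def is_square_def by (metis mult_zero_left)
  have g0: "\<gamma> \<noteq> 0"
  proof
    assume "\<gamma> = 0" then have "is_square (\<beta>^2 - 4*\<alpha>*\<gamma>)" unfolding is_square_def
      by (auto simp: power2_eq_square)
    then show False using ns by simp
  qed
  define a0 where "a0 = -\<delta> / (4*(\<gamma>*\<gamma>))"
  have a00: "a0 \<noteq> 0" unfolding a0_def using d0 g0 by simp
  have va0: "v a0 = v \<delta> - 2 * v \<gamma>"
  proof -
    have "v (4*(\<gamma>*\<gamma>)) = 2 * v \<gamma>" using vmul[OF DV, of 4 "\<gamma>*\<gamma>"] vmul[OF DV, of \<gamma> \<gamma>] v4 g0 by simp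
    then show ?thesis unfolding a0_def using vdiv[OF DV, of "-\<delta>" "4*(\<gamma>*\<gamma>)"] vneg[OF DV] d0 g0 by simp
  qed
  obtain k where k: "v \<delta> = 2 * k" using ev unfolding \<delta>_def by (auto elim: evenE)
  obtain t where t: "t \<noteq> 0" "v t = v \<gamma> - k" using vsurj[OF DV] by blast
  define \<alpha>' where "\<alpha>' = -(t*t)*\<delta>/(4*(\<gamma>*\<gamma>))"
  have al: "\<alpha>' = (t*t) * a0" unfolding \<alpha>'_def a0_def by simp
  have al0: "\<alpha>' \<noteq> 0" using al t a00 by simp
  have val: "v \<alpha>' = 0" using al vmul[OF DV, of "t*t" a0] vmul[OF DV, of t t] t a00 va0 k by simp
  have nsq: "\<not> (\<exists>r. -\<alpha>' = r * r)"
  proof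
    assume "\<exists>r. -\<alpha>' = r * r"
    then obtain r where r: "-\<alpha>' = r * r" by blast
    have "\<delta> = (2*\<gamma>*r/t) * (2*\<gamma>*r/t)" using r t g0 unfolding \<alpha>'_def by (simp add: field_simps)
    then show False using ns unfolding \<delta>_def is_square_def by blast
  qed
  let ?P = "mk2 t 0 (-(\<beta>*t)/(2*\<gamma>)) 1"
  have c1: "conj_set (matrix_inv ?P) (torus \<alpha> \<beta> \<gamma>) = torus \<alpha>' 0 1"
    using diag_conj(1)[OF g0 t(1)] unfolding \<alpha>'_def \<delta>_def by simp
  have c2: "matrix_inv ?P \<in> GL2" using diag_conj(2)[OF g0 t(1)] by simp
  show ?thesis using c1 c2 canon_of[OF NL odd al0 val nsq] by metis
qed


lemma canon_data:
  fixes v :: "'a::field_char_0 \<Rightarrow> int"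
  assumes DV: "discrete_valuation v" and c: "canonical_inert v T"
  shows "\<exists>\<alpha>. T = torus \<alpha> 0 1 \<and> \<alpha> \<noteq> 0 \<and> v \<alpha> = 0 \<and> \<not> (\<exists>r. -\<alpha> = r * r)"
proof -
  obtain \<alpha> where a: "T = torus \<alpha> 0 1" "\<alpha> \<in> int_units v" "\<not> (\<exists>u \<in> int_units v. -\<alpha> = u * u)"
    using c unfolding canonical_inert_def by blast
  have a0: "\<alpha> \<noteq> 0" "v \<alpha> = 0" using a(2) unfolding int_units_def by auto
  have "\<not> (\<exists>r. -\<alpha> = r * r)"
  proof
    assume "\<exists>r. -\<alpha> = r * r"
    then obtain r where r: "-\<alpha> = r * r" by blast
    then have r0: "r \<noteq> 0" using a0 by auto
    have "v (r * r) = 0" using r[symmetric] vneg[OF DV, of \<alpha>] a0 by simp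
    then have "v r = 0" using v_sq[OF DV r0] by simp
    then have "r \<in> int_units v" using r0 unfolding int_units_def by simp
    then show False using a(3) r by blast
  qed
  then show ?thesis using a a0 by blast
qed

lemma part3:
  fixes v :: "'a::field_char_0 \<Rightarrow> int"
  assumes NL: "nonarch_local_field v" and odd: "odd (card (residue_field v))"
    and c1: "canonical_inert v T1" and c2: "canonical_inert v T2"
  shows "\<exists>y \<in> int_units v. T1 = conj_set (a_mat y) T2"
proof -
  have DV: "discrete_valuation v" using NL unfolding nonarch_local_field_def by blast
  obtain \<alpha>1 where a1: "T1 = torus \<alpha>1 0 1" "\<alpha>1 \<noteq> 0" "v \<alpha>1 = 0" "\<not> (\<exists>r. -\<alpha>1 = r * r)"
    using canon_data[OF DV c1] by blast
  obtain \<alpha>2 where a2: "T2 = torus \<alpha>2 0 1" "\<alpha>2 \<noteq> 0" "v \<alpha>2 = 0" "\<not> (\<exists>r. -\<alpha>2 = r * r)"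
    using canon_data[OF DV c2] by blast
  have "\<exists>r. (-\<alpha>1) * (-\<alpha>2) = r * r"
    by (rule sq_units[OF NL odd]) (use a1 a2 vneg[OF DV] in auto)
  then obtain r where r: "\<alpha>1 * \<alpha>2 = r * r" by auto
  have r0: "r \<noteq> 0" using r a1 a2 by auto
  have vr: "v r = 0"
  proof -
    have "v (r * r) = 0" using r[symmetric] vmul[OF DV, of \<alpha>1 \<alpha>2] a1 a2 by simp
    then show ?thesis using v_sq[OF DV r0] by simp
  qed
  define y where "y = r / \<alpha>1"
  have y0: "y \<noteq> 0" unfolding y_def using r0 a1 by simp
  have vy: "v y = 0" unfolding y_def using vdiv[OF DV r0 a1(2)] vr a1 by simp
  have "\<alpha>2 / (y * y) = \<alpha>1" unfolding y_def using r a1(2) r0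
    by (simp add: field_simps)
  then have "T1 = conj_set (a_mat y) T2" using conj_a_mat[OF y0, of \<alpha>2] a1 a2 by simp
  moreover have "y \<in> int_units v" using y0 vy unfolding int_units_def by simp
  ultimately show ?thesis by blast
qed

lemma part1:
  fixes v :: "'a::field_char_0 \<Rightarrow> int"
  assumes NL: "nonarch_local_field v" and odd: "odd (card (residue_field v))"
    and i1: "inert_torus v T1" and i2: "inert_torus v T2"
  shows "\<exists>g \<in> GL2. conj_set g T1 = T2"
proof -
  obtain g1 where g1: "g1 \<in> GL2" "canonical_inert v (conj_set g1 T1)"
    using i1 part2[OF NL odd] unfolding inert_torus_def by blast
  obtain g2 where g2: "g2 \<in> GL2" "canonical_inert v (conj_set g2 T2)"
    using i2 part2[OF NL odd] unfolding inert_torus_def by blast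
  obtain y where y: "y \<in> int_units v" "conj_set g2 T2 = conj_set (a_mat y) (conj_set g1 T1)"
    using part3[OF NL odd g2(2) g1(2)] by blast
  have d1: "det g1 \<noteq> 0" and d2: "det g2 \<noteq> 0" using g1 g2 unfolding GL2_def by auto
  have dy: "det (a_mat y) \<noteq> 0" using y unfolding int_units_def a_mat_def by simp
  have di: "det (matrix_inv g2) \<noteq> 0" using det_inv[OF d2] d2 by simp
  define g where "g = matrix_inv g2 ** (a_mat y ** g1)"
  have "conj_set g T1 = conj_set (matrix_inv g2) (conj_set (a_mat y) (conj_set g1 T1))"
    unfolding g_def using conj_comp[OF dy d1] conj_comp[OF di, of "a_mat y ** g1"] dy d1
    by (simp add: det_mul2)
  also have "\<dots> = T2" using conj_inv[OF d2, of T2] unfolding y(2) .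
  finally have "conj_set g T1 = T2" .
  moreover have "g \<in> GL2" unfolding g_def GL2_def using di dy d1 by (simp add: det_mul2)
  ultimately show ?thesis by blast
qed



lemma dec_BT_core:
  fixes p q r s c :: "'a::field"
  assumes D: "s * s - r * c \<noteq> 0"
  shows "mk2 p q r s = mk2 ((p * s - q * r)/(s * s - r * c)) ((s * q - c * p)/(s * s - r * c)) 0 1 ** mk2 s c r s"
proof -
  define D where "D = s * s - r * c"
  have D0: "D \<noteq> 0" using D unfolding D_def .
  have n1: "(p * s - q * r) * s + (s * q - c * p) * r = p * D" unfolding D_def by (simp add: algebra_simps)
  have n2: "(p * s - q * r) * c + (s * q - c * p) * s = q * D" unfolding D_def by (simp add: algebra_simps)
  have e1: "(p * s - q * r)/D * s + (s * q - c * p)/D * r = p"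
  proof -
    have "(p * s - q * r)/D * s + (s * q - c * p)/D * r = ((p * s - q * r) * s + (s * q - c * p) * r) / D"
      by (simp add: add_divide_distrib)
    then show ?thesis using n1 D0 by simp
  qed
  have e2: "(p * s - q * r)/D * c + (s * q - c * p)/D * s = q"
  proof -
    have "(p * s - q * r)/D * c + (s * q - c * p)/D * s = ((p * s - q * r) * c + (s * q - c * p) * s) / D"
      by (simp add: add_divide_distrib)
    then show ?thesis using n2 D0 by simp
  qed
  show ?thesis using e1 e2 unfolding D_def by simp
qed


lemma dec_TB_core:
  fixes p q r s k x y :: "'a::field"
  assumes k: "k \<noteq> 0" and d: "p * s - q * r \<noteq> 0" and y0: "y \<noteq> 0"
    and ye: "y * (p * s - q * r) * k = p * p * k - r * r"
    and xe: "x * (p * s - q * r) * k = p * q * k - r * s"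
  shows "mk2 p q r s = mk2 (p / y) (r / (k * y)) (k * (r / (k * y))) (p / y) ** mk2 y x 0 1"
proof -
  define \<Delta> where "\<Delta> = p * s - q * r"
  have D0: "\<Delta> \<noteq> 0" using d unfolding \<Delta>_def .
  have ye': "y * \<Delta> * k = p * p * k - r * r" and xe': "x * \<Delta> * k = p * q * k - r * s"
    using ye xe unfolding \<Delta>_def by auto
  have h1: "p * x * k + r = q * k * y"
  proof -
    have "(p * x * k + r) * \<Delta> = p * (x * \<Delta> * k) + r * \<Delta>" by (simp add: algebra_simps)
    also have "\<dots> = q * (y * \<Delta> * k)" by (simp only: xe' ye') (simp add: \<Delta>_def algebra_simps)
    also have "\<dots> = (q * k * y) * \<Delta>" by (simp add: algebra_simps)
    finally show ?thesis using D0 by simp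
  qed
  have h2: "r * x + p = s * y"
  proof -
    have "(r * x + p) * (\<Delta> * k) = r * (x * \<Delta> * k) + p * k * \<Delta>" by (simp add: algebra_simps)
    also have "\<dots> = s * (y * \<Delta> * k)" by (simp only: xe' ye') (simp add: \<Delta>_def algebra_simps)
    also have "\<dots> = (s * y) * (\<Delta> * k)" by (simp add: algebra_simps)
    finally show ?thesis using D0 k by simp
  qed
  have e2: "p / y * x + r / (k * y) = q"
  proof -
    have "p / y * x + r / (k * y) = (p * x * k + r) / (k * y)" using k y0 by (simp add: field_simps)
    then show ?thesis using h1 k y0 by simp
  qed
  have e4: "k * (r / (k * y)) * x + p / y = s"
  proof -
    have "k * (r / (k * y)) * x + p / y = (r * x + p) / y" using k y0 by (simp add: field_simps)
    then show ?thesis using h2 y0 by simp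
  qed
  show ?thesis using e2 e4 y0 k by simp
qed


context
  fixes v :: "'a::field \<Rightarrow> int"
  assumes DV: "discrete_valuation v"
begin

lemma O_mul: "ge v x 0 \<Longrightarrow> ge v y 0 \<Longrightarrow> ge v (x * y) 0"
  using ge_mul[OF DV, of x 0 y 0] by simp

lemma U_O: "x \<noteq> 0 \<Longrightarrow> v x = 0 \<Longrightarrow> ge v x 0"
  unfolding ge_def by simp

lemma U_mul: "x \<noteq> 0 \<Longrightarrow> v x = 0 \<Longrightarrow> y \<noteq> 0 \<Longrightarrow> v y = 0 \<Longrightarrow> x * y \<noteq> 0 \<and> v (x * y) = 0"
  using vmul[OF DV] by simp

lemma U_div: "x \<noteq> 0 \<Longrightarrow> v x = 0 \<Longrightarrow> y \<noteq> 0 \<Longrightarrow> v y = 0 \<Longrightarrow> x / y \<noteq> 0 \<and> v (x / y) = 0"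
  using vdiv[OF DV] by simp

lemma O_div_U: "ge v x 0 \<Longrightarrow> y \<noteq> 0 \<Longrightarrow> v y = 0 \<Longrightarrow> ge v (x / y) 0"
  using unit_ge[OF DV] by blast

lemma GL2_O_mk2: "mk2 a b c d \<in> GL2_O v \<longleftrightarrow> ge v a 0 \<and> ge v b 0 \<and> ge v c 0 \<and> ge v d 0 \<and>
    a * d - b * c \<noteq> 0 \<and> v (a * d - b * c) = 0"
  unfolding GL2_O_def int_ring_ge int_units_def by (simp add: forall_2)

lemma GL2_O_mul: "A \<in> GL2_O v \<Longrightarrow> B \<in> GL2_O v \<Longrightarrow> A ** B \<in> GL2_O v"
proof -
  assume A: "A \<in> GL2_O v" and B: "B \<in> GL2_O v"
  obtain a b c d where a: "A = mk2 a b c d" by (rule mk2_exhaust)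
  obtain e f g h where b: "B = mk2 e f g h" by (rule mk2_exhaust)
  have h1: "ge v a 0" "ge v b 0" "ge v c 0" "ge v d 0" "a * d - b * c \<noteq> 0" "v (a * d - b * c) = 0"
    using A unfolding a GL2_O_mk2 by auto
  have h2: "ge v e 0" "ge v f 0" "ge v g 0" "ge v h 0" "e * h - f * g \<noteq> 0" "v (e * h - f * g) = 0"
    using B unfolding b GL2_O_mk2 by auto
  have det: "(a*e+b*g) * (c*f+d*h) - (a*f+b*h) * (c*e+d*g) = (a * d - b * c) * (e * h - f * g)"
    by (simp add: algebra_simps)
  show ?thesis unfolding a b mk2_mul GL2_O_mk2 det
    using U_mul[OF h1(5,6) h2(5,6)] h1 h2 by (simp add: O_mul ge_add[OF DV])
qed

lemma GL2_O_GL2: "A \<in> GL2_O v \<Longrightarrow> A \<in> GL2"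
  by (cases A rule: mk2_exhaust) (simp add: GL2_O_mk2 GL2_mk2)

end

lemma nz_form:
  fixes \<alpha> s r :: "'a::field"
  assumes a: "\<alpha> \<noteq> 0" "\<not> (\<exists>t. -\<alpha> = t * t)" and sr: "\<not> (s = 0 \<and> r = 0)"
  shows "\<alpha> * s * s + r * r \<noteq> 0"
proof
  assume N: "\<alpha> * s * s + r * r = 0"
  show False
  proof (cases "s = 0")
    case True then show False using N sr by simp
  next
    case False
    have "r * r = -(\<alpha> * s * s)" using N by (simp add: eq_neg_iff_add_eq_0 add.commute)
    then have "(r / s) * (r / s) = -(\<alpha> * s * s) / (s * s)" by simp
    also have "\<dots> = -\<alpha>" using False by simp
    finally have "-\<alpha> = (r / s) * (r / s)" by simp
    then show False using a by blast
  qed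
qed

lemma keyQ:
  fixes v :: "'a::field_char_0 \<Rightarrow> int"
  assumes NL: "nonarch_local_field v" and odd: "odd (card (residue_field v))"
    and a: "\<alpha> \<noteq> 0" "v \<alpha> = 0" "\<not> (\<exists>t. -\<alpha> = t * t)"
    and s: "ge v s 0" and r: "ge v r 0" and nb: "\<not> (ge v s 1 \<and> ge v r 1)"
  shows "\<alpha> * s * s + r * r \<noteq> 0 \<and> v (\<alpha> * s * s + r * r) = 0"
proof -
  have DV: "discrete_valuation v" using NL unfolding nonarch_local_field_def by blast
  have aO: "ge v \<alpha> 0" using a unfolding ge_def by simp
  show ?thesis
  proof (cases "ge v s 1")
    case True
    then have nr: "\<not> ge v r 1" using nb by simp
    have ru: "r \<noteq> 0" "v r = 0" using nr r unfolding ge_def by auto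
    have rr: "r * r \<noteq> 0" "v (r * r) = 0" using U_mul[OF DV ru ru] by auto
    have "ge v (\<alpha> * s) (0 + 1)" by (rule ge_mul[OF DV aO True])
    then have "ge v (\<alpha> * s * s) (1 + 0)" using ge_mul[OF DV _ s, of "\<alpha> * s" 1] by simp
    then have "r * r + \<alpha> * s * s \<noteq> 0 \<and> v (r * r + \<alpha> * s * s) = 0"
      using unit_pert[OF DV rr] by simp
    then show ?thesis by (simp add: add.commute)
  next
    case False
    have su: "s \<noteq> 0" "v s = 0" using False s unfolding ge_def by auto
    have ss: "s * s \<noteq> 0" "v (s * s) = 0" using U_mul[OF DV su su] by auto
    define N where "N = \<alpha> * s * s + r * r"
    have NO: "ge v N 0" unfolding N_def
      using ge_add[OF DV O_mul[OF DV O_mul[OF DV aO s] s] O_mul[OF DV r r]] .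
    show ?thesis
    proof (rule ccontr)
      assume "\<not> (\<alpha> * s * s + r * r \<noteq> 0 \<and> v (\<alpha> * s * s + r * r) = 0)"
      then have "N = 0 \<or> v N \<noteq> 0" unfolding N_def by blast
      then have "ge v N 1" using NO unfolding ge_def by auto
      then have "ge v (N / (s * s)) 1" using unit_ge[OF DV ss] by simp
      moreover have "N / (s * s) = -(-\<alpha> - (r / s) * (r / s))" unfolding N_def using su by (simp add: field_simps)
      ultimately have "ge v (-(-\<alpha> - (r / s) * (r / s))) 1" by simp
      then have "ge v (-\<alpha> - (r / s) * (r / s)) 1" using ge_neg[OF DV] by blast
      moreover have "\<not> ge v (-\<alpha> - (r / s) * (r / s)) 1"
      proof (rule nonsq_mod[OF NL odd])
        show "-\<alpha> \<noteq> 0" using a(1) by simp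
        show "v (-\<alpha>) = 0" using a(2) vneg[OF DV, of \<alpha>] by simp
        show "\<not> (\<exists>r. -\<alpha> = r * r)" using a(3) .
      qed
      ultimately show False by simp
    qed
  qed
qed



lemma B1_mk2: "mk2 y x 0 1 \<in> B1 \<longleftrightarrow> y \<noteq> 0"
  unfolding B1_def by auto

lemma B1_E: "b \<in> B1 \<Longrightarrow> \<exists>y x. b = mk2 y x 0 1 \<and> y \<noteq> 0"
  unfolding B1_def by auto

lemma set_prod_GL2:
  assumes "A \<subseteq> GL2" "B \<subseteq> GL2" shows "set_prod A B \<subseteq> (GL2::'a::field mat2 set)"
  using assms unfolding set_prod_def GL2_def by (auto simp: det_mul2)

lemma B1_GL2: "B1 \<subseteq> (GL2 :: 'a::field mat2 set)"
  unfolding B1_def GL2_def by auto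

lemma BT_G:
  fixes \<alpha> :: "'a::field_char_0"
  assumes a: "\<alpha> \<noteq> 0" "\<not> (\<exists>t. -\<alpha> = t * t)"
  shows "GL2 = set_prod B1 (torus \<alpha> 0 1)"
proof
  show "set_prod B1 (torus \<alpha> 0 1) \<subseteq> GL2" by (rule set_prod_GL2[OF B1_GL2 torus_GL2])
  show "GL2 \<subseteq> set_prod B1 (torus \<alpha> 0 1)"
  proof
    fix g :: "'a mat2" assume g: "g \<in> GL2"
    obtain p q r s where gd: "g = mk2 p q r s" by (rule mk2_exhaust)
    have d: "p * s - q * r \<noteq> 0" using g unfolding gd GL2_mk2 .
    have sr: "\<not> (s = 0 \<and> r = 0)" using d by auto
    have N: "\<alpha> * s * s + r * r \<noteq> 0" by (rule nz_form[OF a sr])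
    define c where "c = -r/\<alpha>"
    have De: "s * s - r * c = (\<alpha> * s * s + r * r) / \<alpha>" unfolding c_def using a(1) by (simp add: field_simps)
    have D: "s * s - r * c \<noteq> 0" using De N a(1) by simp
    have eq: "g = mk2 ((p * s - q * r)/(s * s - r * c)) ((s * q - c * p)/(s * s - r * c)) 0 1 ** mk2 s c r s"
      unfolding gd by (rule dec_BT_core[OF D])
    have b: "mk2 ((p * s - q * r)/(s * s - r * c)) ((s * q - c * p)/(s * s - r * c)) 0 1 \<in> B1"
      using d D by (simp add: B1_mk2)
    have t: "mk2 s c r s \<in> torus \<alpha> 0 1"
      unfolding torus01[OF a(1)] using D a(1) unfolding c_def by (simp add: algebra_simps)
    show "g \<in> set_prod B1 (torus \<alpha> 0 1)" unfolding set_prod_def using eq b t by blast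
  qed
qed

lemma TB_G:
  fixes \<alpha> :: "'a::field_char_0"
  assumes a: "\<alpha> \<noteq> 0" "\<not> (\<exists>t. -\<alpha> = t * t)"
  shows "GL2 = set_prod (torus \<alpha> 0 1) B1"
proof
  show "set_prod (torus \<alpha> 0 1) B1 \<subseteq> GL2" by (rule set_prod_GL2[OF torus_GL2 B1_GL2])
  show "GL2 \<subseteq> set_prod (torus \<alpha> 0 1) B1"
  proof
    fix g :: "'a mat2" assume g: "g \<in> GL2"
    obtain p q r s where gd: "g = mk2 p q r s" by (rule mk2_exhaust)
    have d: "p * s - q * r \<noteq> 0" using g unfolding gd GL2_mk2 .
    have sr: "\<not> (p = 0 \<and> r = 0)" using d by auto
    have N: "\<alpha> * p * p + r * r \<noteq> 0" by (rule nz_form[OF a sr])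
    define k where "k = -\<alpha>"
    have k: "k \<noteq> 0" using a(1) unfolding k_def by simp
    define y where "y = (p * p * k - r * r) / ((p * s - q * r) * k)"
    define x where "x = (p * q * k - r * s) / ((p * s - q * r) * k)"
    have ye: "y * (p * s - q * r) * k = p * p * k - r * r" unfolding y_def using d k by simp
    have xe: "x * (p * s - q * r) * k = p * q * k - r * s" unfolding x_def using d k by simp
    have nn: "p * p * k - r * r = -(\<alpha> * p * p + r * r)" unfolding k_def by simp
    have nz: "p * p * k - r * r \<noteq> 0" unfolding nn using N by (metis neg_equal_0_iff_equal)
    have y0: "y \<noteq> 0" unfolding y_def using nz d k by simp
    have eq: "g = mk2 (p / y) (r / (k * y)) (k * (r / (k * y))) (p / y) ** mk2 y x 0 1"
      unfolding gd by (rule dec_TB_core[OF k d y0 ye xe])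
    have b: "mk2 y x 0 1 \<in> B1" using y0 by (simp add: B1_mk2)
    have tt: "(p / y) * (p / y) + \<alpha> * ((r / (k * y)) * (r / (k * y))) = (\<alpha> * p * p + r * r) / (\<alpha> * (y * y))"
      unfolding k_def using a(1) y0 by (simp add: field_simps)
    have t: "mk2 (p / y) (r / (k * y)) (k * (r / (k * y))) (p / y) \<in> torus \<alpha> 0 1"
    proof -
      have "k * (r / (k * y)) = -(\<alpha> * (r / (k * y)))" unfolding k_def by simp
      moreover have "(p / y) * (p / y) + \<alpha> * ((r / (k * y)) * (r / (k * y))) \<noteq> 0"
        unfolding tt using N a(1) y0 by simp
      ultimately show ?thesis unfolding torus01'[OF a(1)] by metis
    qed
    show "g \<in> set_prod (torus \<alpha> 0 1) B1" unfolding set_prod_def using eq b t by blast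
  qed
qed


lemma nb_lem:
  fixes v :: "'a::field \<Rightarrow> int"
  assumes DV: "discrete_valuation v"
    and o: "ge v p 0" "ge v q 0" "ge v r 0" "ge v s 0" and du: "p * s - q * r \<noteq> 0" "v (p * s - q * r) = 0"
  shows "\<not> (ge v s 1 \<and> ge v r 1)" "\<not> (ge v p 1 \<and> ge v r 1)"
proof -
  have nd: "\<not> ge v (p * s - q * r) 1" using du unfolding ge_def by simp
  show "\<not> (ge v s 1 \<and> ge v r 1)"
  proof
    assume h: "ge v s 1 \<and> ge v r 1"
    have "ge v (p * s) (0 + 1)" using ge_mul[OF DV o(1)] h by blast
    moreover have "ge v (q * r) (0 + 1)" using ge_mul[OF DV o(2)] h by blast
    ultimately have "ge v (p * s - q * r) 1" using ge_diff[OF DV] by simp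
    then show False using nd by simp
  qed
  show "\<not> (ge v p 1 \<and> ge v r 1)"
  proof
    assume h: "ge v p 1 \<and> ge v r 1"
    have "ge v (p * s) (1 + 0)" using ge_mul[OF DV _ o(4)] h by blast
    moreover have "ge v (q * r) (0 + 1)" using ge_mul[OF DV o(2)] h by blast
    ultimately have "ge v (p * s - q * r) 1" using ge_diff[OF DV] by simp
    then show False using nd by simp
  qed
qed

lemma B1_O_mk2:
  fixes v :: "'a::field \<Rightarrow> int"
  assumes DV: "discrete_valuation v"
  shows "mk2 y x 0 1 \<in> B1_O v \<longleftrightarrow> y \<noteq> 0 \<and> v y = 0 \<and> ge v x 0"
  unfolding B1_O_def Int_iff GL2_O_mk2[OF DV] using v1[OF DV] by (auto simp: B1_mk2 ge_def)

lemma BT_K: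
  fixes v :: "'a::field_char_0 \<Rightarrow> int"
  assumes NL: "nonarch_local_field v" and odd: "odd (card (residue_field v))"
    and a: "\<alpha> \<noteq> 0" "v \<alpha> = 0" "\<not> (\<exists>t. -\<alpha> = t * t)"
  shows "GL2_O v = set_prod (B1_O v) (torus \<alpha> 0 1 \<inter> GL2_O v)"
proof
  have DV: "discrete_valuation v" using NL unfolding nonarch_local_field_def by blast
  show "set_prod (B1_O v) (torus \<alpha> 0 1 \<inter> GL2_O v) \<subseteq> GL2_O v"
    unfolding set_prod_def B1_O_def using GL2_O_mul[OF DV] by blast
  show "GL2_O v \<subseteq> set_prod (B1_O v) (torus \<alpha> 0 1 \<inter> GL2_O v)"
  proof
    fix g assume g: "g \<in> GL2_O v"
    obtain p q r s where gd: "g = mk2 p q r s" by (rule mk2_exhaust)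
    have o: "ge v p 0" "ge v q 0" "ge v r 0" "ge v s 0" and du: "p * s - q * r \<noteq> 0" "v (p * s - q * r) = 0"
      using g unfolding gd GL2_O_mk2[OF DV] by auto
    have nb: "\<not> (ge v s 1 \<and> ge v r 1)" by (rule nb_lem(1)[OF DV o du])
    have NU: "\<alpha> * s * s + r * r \<noteq> 0 \<and> v (\<alpha> * s * s + r * r) = 0"
      by (rule keyQ[OF NL odd a o(4) o(3) nb])
    define c where "c = -r/\<alpha>"
    have cO: "ge v c 0" unfolding c_def using O_div_U[OF DV _ a(1,2), of "-r"] o(3) ge_neg[OF DV] by simp
    have De: "s * s - r * c = (\<alpha> * s * s + r * r) / \<alpha>" unfolding c_def using a(1) by (simp add: field_simps)
    have DU: "s * s - r * c \<noteq> 0 \<and> v (s * s - r * c) = 0" unfolding De using U_div[OF DV _ _ a(1,2)] NU by blast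
    have eq: "g = mk2 ((p * s - q * r)/(s * s - r * c)) ((s * q - c * p)/(s * s - r * c)) 0 1 ** mk2 s c r s"
      unfolding gd by (rule dec_BT_core) (use DU in simp)
    have yU: "(p * s - q * r)/(s * s - r * c) \<noteq> 0 \<and> v ((p * s - q * r)/(s * s - r * c)) = 0"
      using U_div[OF DV du] DU by blast
    have xO: "ge v ((s * q - c * p)/(s * s - r * c)) 0"
    proof (rule O_div_U[OF DV])
      show "ge v (s * q - c * p) 0" using ge_diff[OF DV O_mul[OF DV o(4) o(2)] O_mul[OF DV cO o(1)]] .
    qed (use DU in auto)
    have b: "mk2 ((p * s - q * r)/(s * s - r * c)) ((s * q - c * p)/(s * s - r * c)) 0 1 \<in> B1_O v"
      unfolding B1_O_mk2[OF DV] using yU xO by blast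
    have t: "mk2 s c r s \<in> torus \<alpha> 0 1"
      unfolding torus01[OF a(1)] using DU a(1) unfolding c_def by (simp add: algebra_simps)
    have t2: "mk2 s c r s \<in> GL2_O v"
      unfolding GL2_O_mk2[OF DV] using o cO DU by (simp add: mult.commute)
    show "g \<in> set_prod (B1_O v) (torus \<alpha> 0 1 \<inter> GL2_O v)" unfolding set_prod_def using eq b t t2 by blast
  qed
qed


lemma TB_K:
  fixes v :: "'a::field_char_0 \<Rightarrow> int"
  assumes NL: "nonarch_local_field v" and odd: "odd (card (residue_field v))"
    and a: "\<alpha> \<noteq> 0" "v \<alpha> = 0" "\<not> (\<exists>t. -\<alpha> = t * t)"
  shows "GL2_O v = set_prod (torus \<alpha> 0 1 \<inter> GL2_O v) (B1_O v)"
proof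
  have DV: "discrete_valuation v" using NL unfolding nonarch_local_field_def by blast
  show "set_prod (torus \<alpha> 0 1 \<inter> GL2_O v) (B1_O v) \<subseteq> GL2_O v"
    unfolding set_prod_def B1_O_def using GL2_O_mul[OF DV] by blast
  show "GL2_O v \<subseteq> set_prod (torus \<alpha> 0 1 \<inter> GL2_O v) (B1_O v)"
  proof
    fix g assume g: "g \<in> GL2_O v"
    obtain p q r s where gd: "g = mk2 p q r s" by (rule mk2_exhaust)
    have o: "ge v p 0" "ge v q 0" "ge v r 0" "ge v s 0" and du: "p * s - q * r \<noteq> 0" "v (p * s - q * r) = 0"
      using g unfolding gd GL2_O_mk2[OF DV] by auto
    have nb: "\<not> (ge v p 1 \<and> ge v r 1)" by (rule nb_lem(2)[OF DV o du])
    have NU: "\<alpha> * p * p + r * r \<noteq> 0 \<and> v (\<alpha> * p * p + r * r) = 0"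
      by (rule keyQ[OF NL odd a o(1) o(3) nb])
    define k where "k = -\<alpha>"
    have k: "k \<noteq> 0" "v k = 0" using a(1,2) vneg[OF DV, of \<alpha>] unfolding k_def by auto
    define y where "y = (p * p * k - r * r) / ((p * s - q * r) * k)"
    define x where "x = (p * q * k - r * s) / ((p * s - q * r) * k)"
    have ye: "y * (p * s - q * r) * k = p * p * k - r * r" unfolding y_def using du k by simp
    have xe: "x * (p * s - q * r) * k = p * q * k - r * s" unfolding x_def using du k by simp
    have nn: "p * p * k - r * r = -(\<alpha> * p * p + r * r)" unfolding k_def by simp
    have nU: "p * p * k - r * r \<noteq> 0 \<and> v (p * p * k - r * r) = 0"
      unfolding nn using NU vneg[OF DV, of "\<alpha> * p * p + r * r"] by (metis neg_equal_0_iff_equal)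
    have dkU: "(p * s - q * r) * k \<noteq> 0 \<and> v ((p * s - q * r) * k) = 0" using U_mul[OF DV du k] .
    have yU: "y \<noteq> 0 \<and> v y = 0" unfolding y_def using U_div[OF DV _ _ ] nU dkU by blast
    have xO: "ge v x 0" unfolding x_def
    proof (rule O_div_U[OF DV])
      have "ge v (p * q * k) 0" using O_mul[OF DV O_mul[OF DV o(1) o(2)] U_O[OF DV k]] .
      then show "ge v (p * q * k - r * s) 0" using ge_diff[OF DV _ O_mul[OF DV o(3) o(4)]] by blast
    qed (use dkU in auto)
    have y0: "y \<noteq> 0" using yU by simp
    have eq: "g = mk2 (p / y) (r / (k * y)) (k * (r / (k * y))) (p / y) ** mk2 y x 0 1"
      unfolding gd by (rule dec_TB_core[OF k(1) du(1) y0 ye xe])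
    have b: "mk2 y x 0 1 \<in> B1_O v" unfolding B1_O_mk2[OF DV] using yU xO by blast
    have kyU: "k * y \<noteq> 0 \<and> v (k * y) = 0" using U_mul[OF DV k] yU by blast
    have aO: "ge v (p / y) 0" using O_div_U[OF DV o(1)] yU by blast
    have cO: "ge v (r / (k * y)) 0" using O_div_U[OF DV o(3)] kyU by blast
    have kcO: "ge v (k * (r / (k * y))) 0" using O_mul[OF DV U_O[OF DV k] cO] .
    have tt: "(p / y) * (p / y) + \<alpha> * ((r / (k * y)) * (r / (k * y))) = (\<alpha> * p * p + r * r) / (\<alpha> * (y * y))"
      unfolding k_def using a(1) y0 by (simp add: field_simps)
    have ayyU: "\<alpha> * (y * y) \<noteq> 0 \<and> v (\<alpha> * (y * y)) = 0"
      using U_mul[OF DV a(1,2)] U_mul[OF DV] yU by blast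
    have ttU: "(p / y) * (p / y) + \<alpha> * ((r / (k * y)) * (r / (k * y))) \<noteq> 0 \<and>
        v ((p / y) * (p / y) + \<alpha> * ((r / (k * y)) * (r / (k * y)))) = 0"
      unfolding tt using U_div[OF DV _ _] NU ayyU by blast
    have kc: "k * (r / (k * y)) = -(\<alpha> * (r / (k * y)))" unfolding k_def by simp
    have dt: "p / y * (p / y) - r / (k * y) * (k * (r / (k * y)))
        = (p / y) * (p / y) + \<alpha> * ((r / (k * y)) * (r / (k * y)))" unfolding kc by (simp add: algebra_simps)
    have t: "mk2 (p / y) (r / (k * y)) (k * (r / (k * y))) (p / y) \<in> torus \<alpha> 0 1"
      unfolding torus01'[OF a(1)] using kc ttU by metis
    have t2: "mk2 (p / y) (r / (k * y)) (k * (r / (k * y))) (p / y) \<in> GL2_O v"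
      unfolding GL2_O_mk2[OF DV] dt using aO cO kcO ttU by blast
    show "g \<in> set_prod (torus \<alpha> 0 1 \<inter> GL2_O v) (B1_O v)" unfolding set_prod_def using eq b t t2 by blast
  qed
qed

lemma part4:
  fixes v :: "'a::field_char_0 \<Rightarrow> int"
  assumes NL: "nonarch_local_field v" and odd: "odd (card (residue_field v))"
    and c: "canonical_inert v T"
  shows "GL2 = set_prod B1 T \<and> GL2 = set_prod T B1 \<and>
            GL2_O v = set_prod (B1_O v) (T \<inter> GL2_O v) \<and>
            GL2_O v = set_prod (T \<inter> GL2_O v) (B1_O v)"
proof -
  have DV: "discrete_valuation v" using NL unfolding nonarch_local_field_def by blast
  obtain \<alpha> where a: "T = torus \<alpha> 0 1" "\<alpha> \<noteq> 0" "v \<alpha> = 0" "\<not> (\<exists>r. -\<alpha> = r * r)"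
    using canon_data[OF DV c] by blast
  show ?thesis using BT_G[OF a(2,4)] TB_G[OF a(2,4)] BT_K[OF NL odd a(2-4)] TB_K[OF NL odd a(2-4)] a(1)
    by simp
qed

theorem proposition2p3:
  fixes v :: "'a::field_char_0 \<Rightarrow> int"
  assumes "nonarch_local_field v"
    and "odd (card (residue_field v))"
  shows "(\<forall>T1 T2. inert_torus v T1 \<longrightarrow> inert_torus v T2 \<longrightarrow>
            (\<exists>g \<in> GL2. conj_set g T1 = T2))
    \<and> (\<forall>T. inert_torus v T \<longrightarrow> (\<exists>g \<in> GL2. canonical_inert v (conj_set g T)))
    \<and> (\<forall>T1 T2. canonical_inert v T1 \<longrightarrow> canonical_inert v T2 \<longrightarrow>
            (\<exists>y \<in> int_units v. T1 = conj_set (a_mat y) T2))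
    \<and> (\<forall>T. canonical_inert v T \<longrightarrow>
            GL2 = set_prod B1 T \<and> GL2 = set_prod T B1 \<and>
            GL2_O v = set_prod (B1_O v) (T \<inter> GL2_O v) \<and>
            GL2_O v = set_prod (T \<inter> GL2_O v) (B1_O v))"
proof (intro conjI allI impI)
  fix T1 T2 assume "inert_torus v T1" "inert_torus v T2"
  then show "\<exists>g \<in> GL2. conj_set g T1 = T2" by (rule part1[OF assms])
next
  fix T assume "inert_torus v T"
  then show "\<exists>g \<in> GL2. canonical_inert v (conj_set g T)"
    using part2[OF assms] unfolding inert_torus_def by blast
next
  fix T1 T2 assume "canonical_inert v T1" "canonical_inert v T2"
  then show "\<exists>y \<in> int_units v. T1 = conj_set (a_mat y) T2" by (rule part3[OF assms])
next
  fix T assume c: "canonical_inert v T"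
  show "GL2 = set_prod B1 T" using part4[OF assms c] by blast
  show "GL2 = set_prod T B1" using part4[OF assms c] by blast
  show "GL2_O v = set_prod (B1_O v) (T \<inter> GL2_O v)" using part4[OF assms c] by blast
  show "GL2_O v = set_prod (T \<inter> GL2_O v) (B1_O v)" using part4[OF assms c] by blast
qed


end
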